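(* Let $T$ be an arbitrary triangle, $\Gamma_{h,T}$ an open line segment with endpoints on $\partial T$ dividing $T$ into two nonempty open parts $T_h^\pm$, and $\mu^\pm>0$. Then every pair $(\mathbf{v},q)\in \mathbf{V}M_h^{IFE}(T)$ is uniquely determined by the values $N_{i,T}(\mathbf{v},q)$, $i=1,\dots,7$. Moreover, $$(\mathbf{v},q)=(\mathbf{v}^{J_0},q^{J_0})+(c_2\mathbf{v}^{J_2},c_1q^{J_1}),$$ where $\mathbf{v}^{J_0}=\sum_{i=1}^6N_{i,T}(\mathbf{v},q)\boldsymbol{\phi}_{i,T}$, $q^{J_0}=N_{7,T}(\mathbf{v},q)$, $$c_1=\sigma(\mu^--\mu^+,\mathbf{v}^{J_0},0)\mathbf{n}_h\cdot\mathbf{n}_h,\qquad c_2=\frac{\sigma(\mu^-/\mu^+-1,\mathbf{v}^{J_0},0)\mathbf{n}_h\cdot\mathbf{t}_h}{1+(\mu^-/\mu^+-1)\nabla\pi^{CR}_{h,T}w\cdot\mathbf{n}_h},$$ $q^{J_1}=z-\pi^0_{h,T}z$ and $\mathbf{v}^{J_2}=(w-\pi^{CR}_{h,T}w)\mathbf{t}_h$.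
   Context: $\mathbf{n}_h$ is the unit normal of $\Gamma_{h,T}$ pointing into $T_h^+$, $\mathbf{t}_h$ is $\mathbf{n}_h$ rotated $90^\circ$ clockwise. $\sigma(\mu,\mathbf{v},q)=2\mu\boldsymbol{\epsilon}(\mathbf{v})-q\mathbb{I}$, $\boldsymbol{\epsilon}(\mathbf{v})=\frac12(\nabla\mathbf{v}+(\nabla\mathbf{v})^T)$ (with $\mu$ any real number). For polynomials $g^\pm$ on $T$, $[\![g^\pm]\!]=g^+-g^-$. The local IFE space $\mathbf{V}M_h^{IFE}(T)$ is the set of pairs $(\mathbf{v},q)$ with $\mathbf{v}=\mathbf{v}^\pm$, $q=q^\pm$ on $T_h^\pm$, where $\mathbf{v}^\pm\in P_1(T)^2$, $q^\pm\in P_0(T)$ satisfy $[\![\sigma(\mu^\pm,\mathbf{v}^\pm,q^\pm)\mathbf{n}_h]\!]=\mathbf{0}$, $\mathbf{v}^+=\mathbf{v}^-$ on $\Gamma_{h,T}$, and $[\![\nabla\cdot\mathbf{v}^\pm]\!]=0$. With edges $e_1,e_2,e_3$ and $\mathbf{v}=(v_1,v_2)^T$: $N_{i,T}(\mathbf{v},q)=|e_i|^{-1}\int_{e_i}v_1$, $N_{3+i,T}=|e_i|^{-1}\int_{e_i}v_2$ ($i=1,2,3$), $N_{7,T}=|T|^{-1}\int_Tq$. $\lambda_{i,T}\in P_1(T)$ are the Crouzeix–Raviart basis functions, $|e_j|^{-1}\int_{e_j}\lambda_{i,T}=\delta_{ij}$, and $\boldsymbol{\phi}_{i,T}=(\lambda_{i,T},0)^T$,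 $\boldsymbol{\phi}_{i+3,T}=(0,\lambda_{i,T})^T$, $i=1,2,3$. $\pi^{CR}_{h,T}$ is the linear interpolant matching the three edge integrals, $\pi^0_{h,T}$ the mean over $T$. $z=-1$ on $T_h^+$, $z=0$ on $T_h^-$; $w=\operatorname{dist}(\cdot,\Gamma_{h,T})$ on $T_h^+$, $w=0$ on $T_h^-$. *)

theory Defs
  imports "HOL-Analysis.Analysis"
begin

type_synonym pt = "real \<times> real"

definition P1 :: "(pt \<Rightarrow> real) \<Rightarrow> bool" where
  "P1 f \<longleftrightarrow> (\<exists>c b1 b2. \<forall>x. f x = c + b1 * fst x + b2 * snd x)"

definition P1v :: "(pt \<Rightarrow> pt) \<Rightarrow> bool" where
  "P1v v \<longleftrightarrow> P1 (\<lambda>x. fst (v x)) \<and> P1 (\<lambda>x. snd (v x))"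

text \<open>Partial derivatives / gradient (used only for P1 functions, whose
  derivative is constant; evaluated at the origin).\<close>
definition pd1 :: "(pt \<Rightarrow> real) \<Rightarrow> real" where
  "pd1 f = frechet_derivative f (at 0) (1, 0)"
definition pd2 :: "(pt \<Rightarrow> real) \<Rightarrow> real" where
  "pd2 f = frechet_derivative f (at 0) (0, 1)"
definition grad :: "(pt \<Rightarrow> real) \<Rightarrow> pt" where
  "grad f = (pd1 f, pd2 f)"
definition divg :: "(pt \<Rightarrow> pt) \<Rightarrow> real" where
  "divg v = pd1 (\<lambda>x. fst (v x)) + pd2 (\<lambda>x. snd (v x))"

text \<open>sigma(mu,v,q) n = (2 mu eps(v) - q I) n, for P1 vector fields v and constant q.\<close>
definition sigma_n :: "real \<Rightarrow> (pt \<Rightarrow> pt) \<Rightarrow> real \<Rightarrow> pt \<Rightarrow> pt" where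
  "sigma_n mu v q n =
     (let e11 = pd1 (\<lambda>x. fst (v x));
          e22 = pd2 (\<lambda>x. snd (v x));
          e12 = (pd2 (\<lambda>x. fst (v x)) + pd1 (\<lambda>x. snd (v x))) / 2
      in (2 * mu * (e11 * fst n + e12 * snd n) - q * fst n,
          2 * mu * (e12 * fst n + e22 * snd n) - q * snd n))"

definition IFE :: "pt set \<Rightarrow> pt set \<Rightarrow> pt set \<Rightarrow> pt \<Rightarrow> real \<Rightarrow> real
                   \<Rightarrow> (pt \<Rightarrow> pt) \<Rightarrow> (pt \<Rightarrow> real) \<Rightarrow> bool" where
  "IFE Tp Tm G n mup mum v q \<longleftrightarrow>
     (\<exists>vp vm (qp::real) (qm::real). P1v vp \<and> P1v vm \<and>
        (\<forall>x\<in>Tp. v x = vp x \<and> q x = qp) \<and>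
        (\<forall>x\<in>Tm. v x = vm x \<and> q x = qm) \<and>
        sigma_n mup vp qp n - sigma_n mum vm qm n = 0 \<and>
        (\<forall>x\<in>G. vp x = vm x) \<and>
        divg vp - divg vm = 0)"

text \<open>Mean value over a segment [a,b]: |e|^{-1} \<integral>_e f ds, via the affine
  parametrisation (arc length = |e| t).\<close>
definition edge_avg :: "pt \<Rightarrow> pt \<Rightarrow> (pt \<Rightarrow> real) \<Rightarrow> real" where
  "edge_avg a b f = integral {0..1} (\<lambda>t. f (a + t *\<^sub>R (b - a)))"

text \<open>Edges of the triangle with vertices a1 a2 a3: e_i is the edge opposite a_i.\<close>
definition edge :: "pt \<Rightarrow> pt \<Rightarrow> pt \<Rightarrow> nat \<Rightarrow> pt \<times> pt" where
  "edge a1 a2 a3 i = (if i = 1 then (a2, a3) else if i = 2 then (a3, a1) else (a1, a2))"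

definition eavg :: "pt \<Rightarrow> pt \<Rightarrow> pt \<Rightarrow> nat \<Rightarrow> (pt \<Rightarrow> real) \<Rightarrow> real" where
  "eavg a1 a2 a3 i f = (case edge a1 a2 a3 i of (a, b) \<Rightarrow> edge_avg a b f)"

definition mean :: "pt set \<Rightarrow> (pt \<Rightarrow> real) \<Rightarrow> real" where
  "mean T f = integral T f / measure lebesgue T"

definition Ndof :: "pt \<Rightarrow> pt \<Rightarrow> pt \<Rightarrow> nat \<Rightarrow> (pt \<Rightarrow> pt) \<Rightarrow> (pt \<Rightarrow> real) \<Rightarrow> real" where
  "Ndof a1 a2 a3 i v q =
     (if i \<in> {1, 2, 3} then eavg a1 a2 a3 i (\<lambda>x. fst (v x))
      else if i \<in> {4, 5, 6} then eavg a1 a2 a3 (i - 3) (\<lambda>x. snd (v x))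
      else mean (convex hull {a1, a2, a3}) q)"

definition cr_basis :: "pt \<Rightarrow> pt \<Rightarrow> pt \<Rightarrow> nat \<Rightarrow> pt \<Rightarrow> real" where
  "cr_basis a1 a2 a3 i =
     (THE l. P1 l \<and> (\<forall>j\<in>{1, 2, 3}. eavg a1 a2 a3 j l = (if i = j then 1 else 0)))"

definition pi_cr :: "pt \<Rightarrow> pt \<Rightarrow> pt \<Rightarrow> (pt \<Rightarrow> real) \<Rightarrow> pt \<Rightarrow> real" where
  "pi_cr a1 a2 a3 f = (THE g. P1 g \<and> (\<forall>j\<in>{1, 2, 3}. eavg a1 a2 a3 j g = eavg a1 a2 a3 j f))"

end

theory Submission
  imports Defs
begin

definition aff :: "real \<Rightarrow> real \<Rightarrow> real \<Rightarrow> pt \<Rightarrow> real" where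
  "aff c b1 b2 = (\<lambda>x. c + b1 * fst x + b2 * snd x)"

lemma aff_has_derivative: "(aff c b1 b2 has_derivative (\<lambda>h. b1 * fst h + b2 * snd h)) (at x)"
  unfolding aff_def
  by (auto intro!: derivative_eq_intros)

lemma pd_aff: "pd1 (aff c b1 b2) = b1" "pd2 (aff c b1 b2) = b2"
  unfolding pd1_def pd2_def
  using frechet_derivative_at[OF aff_has_derivative[of c b1 b2 0]]
  by (metis fst_conv snd_conv mult_1_right mult_zero_right add_0 add.right_neutral)+

lemma P1_aff: "P1 (aff c b1 b2)"
  unfolding P1_def aff_def by blast

lemma P1_form: assumes "P1 f" shows "f = aff (f 0) (pd1 f) (pd2 f)"
proof -
  from assms obtain c b1 b2 where f: "f = aff c b1 b2"
    unfolding P1_def aff_def by blast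
  show ?thesis unfolding f pd_aff by (simp add: aff_def)
qed

lemma P1_iff: "P1 f \<longleftrightarrow> (\<exists>c b1 b2. f = aff c b1 b2)"
  using P1_form P1_aff by metis

lemma integral_lin01: "integral {0..1::real} (\<lambda>t. \<alpha> + t * \<beta>) = \<alpha> + \<beta> / 2"
proof -
  have "((\<lambda>t. \<alpha> + t * \<beta>) has_integral ((\<lambda>t. \<alpha> * t + \<beta> * t^2/2) 1 - (\<lambda>t. \<alpha> * t + \<beta> * t^2/2) 0)) {0..1::real}"
    apply (rule fundamental_theorem_of_calculus)
     apply simp
    apply (auto intro!: derivative_eq_intros simp: has_real_derivative_iff_has_vector_derivative[symmetric])
    done
  then show ?thesis by (simp add: integral_unique)
qed

lemma edge_avg_aff: "edge_avg a b (aff c b1 b2) = aff c b1 b2 ((1/2) *\<^sub>R (a + b))"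
proof -
  have "edge_avg a b (aff c b1 b2) = integral {0..1} (\<lambda>t. aff c b1 b2 a + t * (aff c b1 b2 b - aff c b1 b2 a))"
    unfolding edge_avg_def by (rule arg_cong[where f="integral _"]) (auto simp: aff_def algebra_simps)
  also have "\<dots> = aff c b1 b2 a + (aff c b1 b2 b - aff c b1 b2 a) / 2" by (rule integral_lin01)
  also have "\<dots> = aff c b1 b2 ((1/2) *\<^sub>R (a + b))" by (simp add: aff_def field_simps)
  finally show ?thesis .
qed

definition crs :: "pt \<Rightarrow> pt \<Rightarrow> pt \<Rightarrow> real" where
  "crs q1 q2 q3 = (fst q2 - fst q1)*(snd q3 - snd q1) - (snd q2 - snd q1)*(fst q3 - fst q1)"

lemma noncol_crs:
  assumes "\<not> collinear {a1, a2, a3::pt}" shows "crs a1 a2 a3 \<noteq> 0"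
proof
  assume c: "crs a1 a2 a3 = 0"
  have "collinear {a1, a2, a3}"
  proof (cases "a1 = a3")
    case True then show ?thesis by (simp add: collinear_3_expand)
  next
    case False
    obtain d1 d2 where d: "a1 - a3 = (d1, d2)" by (cases "a1 - a3") auto
    obtain e1 e2 where e: "a2 - a3 = (e1, e2)" by (cases "a2 - a3") auto
    have dn: "d1*d1 + d2*d2 \<noteq> 0"
    proof
      assume "d1*d1 + d2*d2 = 0"
      then have "d1 = 0 \<and> d2 = 0" by (metis add_nonneg_eq_0_iff zero_le_square mult_eq_0_iff)
      then show False using False d by (simp add: zero_prod_def[symmetric])
    qed
    have ce: "d1 * e2 = d2 * e1" using c d e unfolding crs_def
      by (cases a1, cases a2, cases a3) (auto simp: algebra_simps)
    define u where "u = (e1*d1 + e2*d2)/(d1*d1+d2*d2)"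
    have h1: "(e1*d1 + e2*d2)*d1 = e1*(d1*d1+d2*d2)" using ce by algebra
    have h2: "(e1*d1 + e2*d2)*d2 = e2*(d1*d1+d2*d2)" using ce by algebra
    have "u * d1 = e1" unfolding u_def using dn h1
      by (simp add: field_simps)
    moreover have "u * d2 = e2" unfolding u_def using dn h2
      by (simp add: field_simps)
    ultimately have "a2 - a3 = u *\<^sub>R (a1 - a3)" using d e by simp
    then have "a2 = u *\<^sub>R a1 + (1 - u) *\<^sub>R a3" by (simp add: algebra_simps)
    then show ?thesis by (auto simp add: collinear_3_expand)
  qed
  with assms show False by simp
qed

lemma interp3:
  assumes "crs q1 q2 q3 \<noteq> 0"
  shows "\<exists>c b1 b2. aff c b1 b2 q1 = m1 \<and> aff c b1 b2 q2 = m2 \<and> aff c b1 b2 q3 = m3"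
proof -
  obtain x1 y1 x2 y2 x3 y3 where q: "q1 = (x1,y1)" "q2 = (x2,y2)" "q3 = (x3,y3)"
    by (cases q1, cases q2, cases q3) auto
  define D where "D = (x2 - x1)*(y3 - y1) - (y2 - y1)*(x3 - x1)"
  have D: "D \<noteq> 0" using assms q unfolding D_def crs_def by simp
  define b1 where "b1 = ((m2-m1)*(y3-y1) - (m3-m1)*(y2-y1))/D"
  define b2 where "b2 = ((m3-m1)*(x2-x1) - (m2-m1)*(x3-x1))/D"
  define c where "c = m1 - b1*x1 - b2*y1"
  have hb1: "b1 * D = (m2-m1)*(y3-y1) - (m3-m1)*(y2-y1)" unfolding b1_def using D by simp
  have hb2: "b2 * D = (m3-m1)*(x2-x1) - (m2-m1)*(x3-x1)" unfolding b2_def using D by simp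
  have k2: "(b1*(x2-x1) + b2*(y2-y1)) * D = (m2-m1) * D"
    using hb1 hb2 unfolding D_def by algebra
  have k3: "(b1*(x3-x1) + b2*(y3-y1)) * D = (m3-m1) * D"
    using hb1 hb2 unfolding D_def by algebra
  from k2 D have k2': "b1*(x2-x1) + b2*(y2-y1) = m2 - m1" by simp
  from k3 D have k3': "b1*(x3-x1) + b2*(y3-y1) = m3 - m1" by simp
  have "aff c b1 b2 q1 = m1" "aff c b1 b2 q2 = m2" "aff c b1 b2 q3 = m3"
    unfolding q aff_def c_def using k2' k3' by (simp_all add: algebra_simps)
  then show ?thesis by blast
qed

lemma uniq3:
  assumes "crs q1 q2 q3 \<noteq> 0"
    and "aff c b1 b2 q1 = aff c' b1' b2' q1" "aff c b1 b2 q2 = aff c' b1' b2' q2"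
        "aff c b1 b2 q3 = aff c' b1' b2' q3"
  shows "aff c b1 b2 = aff c' b1' b2'"
proof -
  obtain x1 y1 x2 y2 x3 y3 where q: "q1 = (x1,y1)" "q2 = (x2,y2)" "q3 = (x3,y3)"
    by (cases q1, cases q2, cases q3) auto
  define D where "D = (x2 - x1)*(y3 - y1) - (y2 - y1)*(x3 - x1)"
  have D: "D \<noteq> 0" using assms q unfolding D_def crs_def by simp
  define B1 where "B1 = b1 - b1'"
  define B2 where "B2 = b2 - b2'"
  have e1: "B1*(x2-x1) + B2*(y2-y1) = 0" and e2: "B1*(x3-x1) + B2*(y3-y1) = 0"
    using assms(2-4) unfolding q aff_def B1_def B2_def by (simp_all add: algebra_simps)
  have "B1 * D = 0" unfolding D_def
    using e1 e2 by algebra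
  then have "B1 = 0" using D by simp
  have "B2 * D = 0" unfolding D_def
    using e1 e2 by algebra
  then have "B2 = 0" using D by simp
  then show ?thesis using \<open>B1 = 0\<close> assms(2) unfolding q aff_def B1_def B2_def by auto
qed

definition mid :: "pt \<Rightarrow> pt \<Rightarrow> pt \<Rightarrow> nat \<Rightarrow> pt" where
  "mid a1 a2 a3 j = (case edge a1 a2 a3 j of (a, b) \<Rightarrow> (1/2) *\<^sub>R (a + b))"

lemma eavg_P1: "P1 f \<Longrightarrow> eavg a1 a2 a3 j f = f (mid a1 a2 a3 j)"
  unfolding eavg_def mid_def
  by (subst P1_form, assumption, subst (2) P1_form, assumption)
     (simp add: edge_avg_aff split: prod.split)

lemma crs_mid: "crs (mid a1 a2 a3 1) (mid a1 a2 a3 2) (mid a1 a2 a3 3) = crs a1 a2 a3 / 4"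
  unfolding mid_def edge_def crs_def by (simp add: algebra_simps)

lemma cr_unique:
  assumes "crs a1 a2 a3 \<noteq> 0" "P1 f" "P1 g" "\<forall>j\<in>{1,2,3}. eavg a1 a2 a3 j f = eavg a1 a2 a3 j g"
  shows "f = g"
proof -
  have c: "crs (mid a1 a2 a3 1) (mid a1 a2 a3 2) (mid a1 a2 a3 3) \<noteq> 0"
    using assms(1) crs_mid[of a1 a2 a3] by (auto simp del: One_nat_def)
  have "aff (f 0) (pd1 f) (pd2 f) = aff (g 0) (pd1 g) (pd2 g)"
    apply (rule uniq3[OF c])
    using assms(4) eavg_P1[OF assms(2)] eavg_P1[OF assms(3)]
      P1_form[OF assms(2), symmetric] P1_form[OF assms(3), symmetric] by auto
  then show ?thesis using P1_form assms(2,3) by metis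
qed

lemma cr_exists:
  assumes "crs a1 a2 a3 \<noteq> 0"
  shows "\<exists>f. P1 f \<and> (\<forall>j\<in>{1,2,3}. eavg a1 a2 a3 j f = m j)"
proof -
  have c: "crs (mid a1 a2 a3 1) (mid a1 a2 a3 2) (mid a1 a2 a3 3) \<noteq> 0"
    using assms(1) crs_mid[of a1 a2 a3] by (auto simp del: One_nat_def)
  obtain c b1 b2 where h: "aff c b1 b2 (mid a1 a2 a3 1) = m 1"
     "aff c b1 b2 (mid a1 a2 a3 2) = m 2" "aff c b1 b2 (mid a1 a2 a3 3) = m 3"
    using interp3[OF c] by blast
  show ?thesis
    by (rule exI[of _ "aff c b1 b2"]) (use h in \<open>auto simp: P1_aff eavg_P1\<close>)
qed

lemma cr_ex1:
  assumes "crs a1 a2 a3 \<noteq> 0"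
  shows "\<exists>!f. P1 f \<and> (\<forall>j\<in>{1,2,3}. eavg a1 a2 a3 j f = m j)"
  using cr_exists[OF assms] cr_unique[OF assms] by metis

lemma pi_cr_spec:
  assumes "crs a1 a2 a3 \<noteq> 0"
  shows "P1 (pi_cr a1 a2 a3 w) \<and> (\<forall>j\<in>{1,2,3}. eavg a1 a2 a3 j (pi_cr a1 a2 a3 w) = eavg a1 a2 a3 j w)"
  unfolding pi_cr_def
  by (rule theI'[OF cr_ex1[OF assms, of "\<lambda>j. eavg a1 a2 a3 j w"]])

lemma cr_basis_spec:
  assumes "crs a1 a2 a3 \<noteq> 0"
  shows "P1 (cr_basis a1 a2 a3 i) \<and> (\<forall>j\<in>{1,2,3}. eavg a1 a2 a3 j (cr_basis a1 a2 a3 i) = (if i = j then 1 else 0))"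
  unfolding cr_basis_def
  by (rule theI'[OF cr_ex1[OF assms, of "\<lambda>j. if i = j then 1 else 0"]])

lemma P1_comb3:
  assumes "P1 f1" "P1 f2" "P1 f3"
  shows "P1 (\<lambda>x. k1 * f1 x + k2 * f2 x + k3 * f3 x)"
proof -
  have "(\<lambda>x. k1 * f1 x + k2 * f2 x + k3 * f3 x) =
     aff (k1 * f1 0 + k2 * f2 0 + k3 * f3 0) (k1 * pd1 f1 + k2 * pd1 f2 + k3 * pd1 f3)
         (k1 * pd2 f1 + k2 * pd2 f2 + k3 * pd2 f3)"
    apply (subst P1_form[OF assms(1)], subst P1_form[OF assms(2)], subst P1_form[OF assms(3)])
    by (simp add: aff_def algebra_simps)
  then show ?thesis by (simp add: P1_aff)
qed

lemma cr_comb: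
  fixes N :: "nat \<Rightarrow> real"
  assumes "crs a1 a2 a3 \<noteq> 0"
  defines "F \<equiv> (\<lambda>x. \<Sum>i\<in>{1,2,3::nat}. N i * cr_basis a1 a2 a3 i x)"
  shows "P1 F \<and> (\<forall>j\<in>{1,2,3}. eavg a1 a2 a3 j F = N j)"
proof -
  have F: "F = (\<lambda>x. N 1 * cr_basis a1 a2 a3 1 x + N 2 * cr_basis a1 a2 a3 2 x + N 3 * cr_basis a1 a2 a3 3 x)"
    unfolding F_def by (simp add: algebra_simps)
  have P: "P1 (cr_basis a1 a2 a3 i)" for i using cr_basis_spec[OF assms(1)] by blast
  have E: "cr_basis a1 a2 a3 i (mid a1 a2 a3 j) = (if i = j then 1 else 0)" if "j \<in> {1,2,3}" for i j
    using cr_basis_spec[OF assms(1), of i] that eavg_P1[OF P] by metis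
  have PF: "P1 F" unfolding F by (rule P1_comb3[OF P P P])
  have "eavg a1 a2 a3 j F = N j" if j: "j \<in> {1,2,3}" for j
  proof -
    have "eavg a1 a2 a3 j F = F (mid a1 a2 a3 j)" by (rule eavg_P1[OF PF])
    also have "\<dots> = N j" using j E[OF j] unfolding F by auto
    finally show ?thesis .
  qed
  then show ?thesis using PF by blast
qed

definition Fc :: "real \<Rightarrow> real \<Rightarrow> real" where
  "Fc \<alpha> \<beta> = (if 0 \<le> \<alpha> \<and> 0 \<le> \<beta> then (\<alpha> + \<beta>)/2 else if \<alpha> \<le> 0 \<and> \<beta> \<le> 0 then 0
     else if 0 < \<alpha> then \<alpha>^2/(2*(\<alpha> - \<beta>)) else \<beta>^2/(2*(\<beta> - \<alpha>)))"

lemma max0_refl: "max 0 (y::real) = y + max 0 (-y)" by (simp add: max_def)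

lemma int_max0_pos:
  fixes \<alpha> \<beta> :: real
  assumes "0 \<le> \<alpha>" "0 \<le> \<beta>"
  shows "integral {0..1} (\<lambda>t. max 0 (\<alpha> + t*(\<beta>-\<alpha>))) = (\<alpha> + \<beta>)/2"
proof -
  have "integral {0..1} (\<lambda>t. max 0 (\<alpha> + t*(\<beta>-\<alpha>))) = integral {0..1} (\<lambda>t. \<alpha> + t*(\<beta>-\<alpha>))"
  proof (rule integral_cong)
    fix t :: real assume t: "t \<in> {0..1}"
    have "\<alpha> + t*(\<beta>-\<alpha>) = (1-t)*\<alpha> + t*\<beta>" by (simp add: algebra_simps)
    also have "\<dots> \<ge> 0" using t assms by auto
    finally show "max 0 (\<alpha> + t*(\<beta>-\<alpha>)) = \<alpha> + t*(\<beta>-\<alpha>)" by simp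
  qed
  also have "\<dots> = (\<alpha> + \<beta>)/2" by (simp only: integral_lin01) (simp add: field_simps)
  finally show ?thesis .
qed

lemma int_max0_cross:
  fixes \<alpha> \<beta> :: real
  assumes "0 < \<alpha>" "\<beta> < 0"
  shows "integral {0..1} (\<lambda>t. max 0 (\<alpha> + t*(\<beta>-\<alpha>))) = \<alpha>^2/(2*(\<alpha> - \<beta>))"
proof -
  define t0 where "t0 = \<alpha>/(\<alpha>-\<beta>)"
  have ab: "\<alpha> - \<beta> > 0" using assms by simp
  have t0: "0 \<le> t0" "t0 \<le> 1" unfolding t0_def using assms ab by (auto simp: field_simps)
  have z: "\<alpha> + t0*(\<beta>-\<alpha>) = 0" unfolding t0_def using ab by (simp add: field_simps)
  have pos: "max 0 (\<alpha> + t*(\<beta>-\<alpha>)) = \<alpha> + t*(\<beta>-\<alpha>)" if "t \<le> t0" for t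
  proof -
    have "\<alpha> + t*(\<beta>-\<alpha>) = (\<alpha> + t0*(\<beta>-\<alpha>)) + (t0 - t)*(\<alpha>-\<beta>)" by (simp add: algebra_simps)
    also have "\<dots> \<ge> 0" using z that ab by simp
    finally show ?thesis by simp
  qed
  have neg: "max 0 (\<alpha> + t*(\<beta>-\<alpha>)) = 0" if "t0 \<le> t" for t
  proof -
    have "\<alpha> + t*(\<beta>-\<alpha>) = (\<alpha> + t0*(\<beta>-\<alpha>)) - (t - t0)*(\<alpha>-\<beta>)" by (simp add: algebra_simps)
    also have "\<dots> \<le> 0" using z that ab by simp
    finally show ?thesis by simp
  qed
  have i1: "((\<lambda>t. max 0 (\<alpha> + t*(\<beta>-\<alpha>))) has_integral
      ((\<lambda>t. \<alpha>*t + (\<beta>-\<alpha>)/2*(t*t)) t0 - (\<lambda>t. \<alpha>*t + (\<beta>-\<alpha>)/2*(t*t)) 0)) {0..t0}"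
  proof (rule fundamental_theorem_of_calculus)
    show "0 \<le> t0" by fact
    fix x assume x: "x \<in> {0..t0}"
    have "((\<lambda>t. \<alpha>*t + (\<beta>-\<alpha>)/2*(t*t)) has_real_derivative (\<alpha> + x*(\<beta>-\<alpha>))) (at x within {0..t0})"
      by (rule derivative_eq_intros refl | simp)+
    then show "((\<lambda>t. \<alpha>*t + (\<beta>-\<alpha>)/2*(t*t)) has_vector_derivative max 0 (\<alpha> + x*(\<beta>-\<alpha>))) (at x within {0..t0})"
      using pos[of x] x by (simp add: has_real_derivative_iff_has_vector_derivative)
  qed
  have i2: "((\<lambda>t. max 0 (\<alpha> + t*(\<beta>-\<alpha>))) has_integral 0) {t0..1}"
    using has_integral_0[of "{t0..1}"]
    by (rule has_integral_eq[rotated]) (use neg in auto)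
  have "((\<lambda>t. max 0 (\<alpha> + t*(\<beta>-\<alpha>))) has_integral
      ((\<lambda>t. \<alpha>*t + (\<beta>-\<alpha>)/2*(t*t)) t0 - (\<lambda>t. \<alpha>*t + (\<beta>-\<alpha>)/2*(t*t)) 0 + 0)) {0..1}"
    by (rule has_integral_combine[OF t0 i1 i2])
  moreover have "(\<lambda>t. \<alpha>*t + (\<beta>-\<alpha>)/2*(t*t)) t0 - (\<lambda>t. \<alpha>*t + (\<beta>-\<alpha>)/2*(t*t)) 0 + 0 = \<alpha>^2/(2*(\<alpha> - \<beta>))"
  proof -
    have zz: "(\<beta>-\<alpha>) * t0 = -\<alpha>" using z by (simp add: algebra_simps)
    have "\<alpha>*t0 + (\<beta>-\<alpha>)/2*(t0*t0) = \<alpha>*t0 + ((\<beta>-\<alpha>)*t0)*t0/2" by simp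
    also have "\<dots> = \<alpha> * t0 / 2" unfolding zz by simp
    also have "\<dots> = \<alpha>^2/(2*(\<alpha> - \<beta>))" unfolding t0_def using ab by (simp add: power2_eq_square)
    finally show ?thesis by simp
  qed
  ultimately show ?thesis by (simp add: integral_unique)
qed

lemma int_max0_refl:
  fixes \<alpha> \<beta> :: real
  shows "integral {0..1} (\<lambda>t. max 0 (\<alpha> + t*(\<beta>-\<alpha>))) =
    (\<alpha> + \<beta>)/2 + integral {0..1} (\<lambda>t. max 0 (-\<alpha> + t*(-\<beta>- -\<alpha>)))"
proof -
  have "integral {0..1} (\<lambda>t. max 0 (\<alpha> + t*(\<beta>-\<alpha>))) =
     integral {0..1} (\<lambda>t. (\<alpha> + t*(\<beta>-\<alpha>)) + max 0 (-\<alpha> + t*(-\<beta>- -\<alpha>)))"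
  proof (rule integral_cong)
    fix t :: real
    have h: "-\<alpha> + t*(-\<beta>- -\<alpha>) = -(\<alpha> + t*(\<beta>-\<alpha>))" by (simp add: algebra_simps)
    show "max 0 (\<alpha> + t*(\<beta>-\<alpha>)) = (\<alpha> + t*(\<beta>-\<alpha>)) + max 0 (-\<alpha> + t*(-\<beta>- -\<alpha>))"
      unfolding h by (rule max0_refl)
  qed
  also have "\<dots> = integral {0..1} (\<lambda>t. \<alpha> + t*(\<beta>-\<alpha>)) + integral {0..1} (\<lambda>t. max 0 (-\<alpha> + t*(-\<beta>- -\<alpha>)))"
    by (rule integral_add; rule integrable_continuous_interval; intro continuous_intros)
  also have "integral {0..1} (\<lambda>t. \<alpha> + t*(\<beta>-\<alpha>)) = (\<alpha> + \<beta>)/2"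
    by (simp only: integral_lin01) (simp add: field_simps)
  finally show ?thesis .
qed

lemma int_max0:
  fixes \<alpha> \<beta> :: real
  shows "integral {0..1} (\<lambda>t. max 0 (\<alpha> + t*(\<beta>-\<alpha>))) = Fc \<alpha> \<beta>"
proof -
  consider "0 \<le> \<alpha> \<and> 0 \<le> \<beta>" | "\<alpha> \<le> 0 \<and> \<beta> \<le> 0" | "0 < \<alpha> \<and> \<beta> < 0" | "\<alpha> < 0 \<and> 0 < \<beta>"
    by linarith
  then show ?thesis
  proof cases
    case 1 then show ?thesis using int_max0_pos[of \<alpha> \<beta>] by (simp add: Fc_def)
  next
    case 2
    have h0: "Fc \<alpha> \<beta> = 0" using 2 by (auto simp: Fc_def)
    have h2: "integral {0..1} (\<lambda>t. max 0 (-\<alpha> + t*(-\<beta>- -\<alpha>))) = (-\<alpha> + -\<beta>)/2"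
      by (rule int_max0_pos) (use 2 in auto)
    show ?thesis by (subst int_max0_refl, subst h2, subst h0) (simp add: field_simps)
  next
    case 3 then show ?thesis using int_max0_cross[of \<alpha> \<beta>] by (simp add: Fc_def)
  next
    case 4
    have "(\<alpha> + \<beta>) / 2 + (- \<alpha>)\<^sup>2 / (2 * (- \<alpha> - - \<beta>)) = \<beta>^2/(2*(\<beta> - \<alpha>))"
      using 4 by (simp add: field_simps power2_eq_square)
    then show ?thesis using 4 int_max0_refl[of \<alpha> \<beta>] int_max0_cross[of "-\<alpha>" "-\<beta>"]
      by (simp add: Fc_def)
  qed
qed

lemma cramer_S:
  fixes C S B u1 u2 u3 v1 v2 v3 m1 m2 m3 :: real
  assumes "C + S*((u2+u3)/2) + B*((v2+v3)/2) = m1"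
    "C + S*((u3+u1)/2) + B*((v3+v1)/2) = m2"
    "C + S*((u1+u2)/2) + B*((v1+v2)/2) = m3"
  shows "S * ((u1-u2)*(v1-v3) - (u1-u3)*(v1-v2)) = 2*((m2-m1)*(v1-v3) - (m3-m1)*(v1-v2))"
proof -
  have d2: "S*(u1-u2) = 2*(m2-m1) - B*(v1-v2)" using assms(1,2) by (simp add: field_simps)
  have d3: "S*(u1-u3) = 2*(m3-m1) - B*(v1-v3)" using assms(1,3) by (simp add: field_simps)
  have "S * ((u1-u2)*(v1-v3) - (u1-u3)*(v1-v2)) = (S*(u1-u2))*(v1-v3) - (S*(u1-u3))*(v1-v2)"
    by (simp add: algebra_simps)
  also have "\<dots> = 2*((m2-m1)*(v1-v3) - (m3-m1)*(v1-v2))" unfolding d2 d3 by (simp add: algebra_simps)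
  finally show ?thesis .
qed

lemma one_pos:
  fixes C S B u1 u2 u3 v1 v2 v3 :: real
  assumes E: "(u1-u2)*(v1-v3) - (u1-u3)*(v1-v2) \<noteq> 0"
    and e: "C + S*((u2+u3)/2) + B*((v2+v3)/2) = Fc u2 u3"
    "C + S*((u3+u1)/2) + B*((v3+v1)/2) = Fc u3 u1"
    "C + S*((u1+u2)/2) + B*((v1+v2)/2) = Fc u1 u2"
    and s: "0 < u1" "u2 \<le> 0" "u3 \<le> 0"
  shows "0 \<le> S \<and> S \<le> 1"
proof -
  have m1: "Fc u2 u3 = 0" using s by (simp add: Fc_def)
  have m2: "Fc u3 u1 = u1^2/(2*(u1-u3))"
    using s by (cases "u3 = 0") (auto simp: Fc_def power2_eq_square field_simps)
  have m3: "Fc u1 u2 = u1^2/(2*(u1-u2))"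
    using s by (cases "u2 = 0") (auto simp: Fc_def power2_eq_square field_simps)
  have p2: "u1 - u2 > 0" "u1 - u3 > 0" using s by auto
  define K where "K = (u1-u2)*(u1-u3)"
  have K: "K > 0" unfolding K_def using p2 by simp
  have h: "S * ((u1-u2)*(v1-v3) - (u1-u3)*(v1-v2)) = 2*((Fc u3 u1 - Fc u2 u3)*(v1-v3) - (Fc u1 u2 - Fc u2 u3)*(v1-v2))"
    by (rule cramer_S[OF e])
  have hm2: "2 * Fc u3 u1 * (u1-u3) = u1^2" unfolding m2 using p2 by (simp add: field_simps)
  have hm3: "2 * Fc u1 u2 * (u1-u2) = u1^2" unfolding m3 using p2 by (simp add: field_simps)
  have "(S * K) * ((u1-u2)*(v1-v3) - (u1-u3)*(v1-v2)) = u1^2 * ((u1-u2)*(v1-v3) - (u1-u3)*(v1-v2))"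
    using h hm2 hm3 m1 unfolding K_def by algebra
  then have SK: "S * K = u1^2" using E by simp
  have "u1^2 \<le> K" unfolding power2_eq_square K_def
    by (rule mult_mono) (use s in auto)
  moreover have "S = u1^2/K" using SK K by (auto simp: field_simps)
  ultimately show ?thesis using K by simp
qed

lemma two_pos:
  fixes C S B u1 u2 u3 v1 v2 v3 :: real
  assumes E: "(u1-u2)*(v1-v3) - (u1-u3)*(v1-v2) \<noteq> 0"
    and e: "C + S*((u2+u3)/2) + B*((v2+v3)/2) = Fc u2 u3"
    "C + S*((u3+u1)/2) + B*((v3+v1)/2) = Fc u3 u1"
    "C + S*((u1+u2)/2) + B*((v1+v2)/2) = Fc u1 u2"
    and s: "0 < u1" "0 < u2" "u3 < 0"
  shows "0 \<le> S \<and> S \<le> 1"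
proof -
  have m1: "Fc u2 u3 = u2^2/(2*(u2-u3))" using s by (simp add: Fc_def)
  have m2: "Fc u3 u1 = u1^2/(2*(u1-u3))" using s by (simp add: Fc_def)
  have m3: "Fc u1 u2 = (u1+u2)/2" using s by (simp add: Fc_def)
  have p2: "u1 - u3 > 0" "u2 - u3 > 0" using s by auto
  define K where "K = (u1-u3)*(u2-u3)"
  have K: "K > 0" unfolding K_def using p2 by simp
  have h: "S * ((u1-u2)*(v1-v3) - (u1-u3)*(v1-v2)) = 2*((Fc u3 u1 - Fc u2 u3)*(v1-v3) - (Fc u1 u2 - Fc u2 u3)*(v1-v2))"
    by (rule cramer_S[OF e])
  have hm1: "2 * Fc u2 u3 * (u2-u3) = u2^2" unfolding m1 using p2 by (simp add: field_simps)
  have hm2: "2 * Fc u3 u1 * (u1-u3) = u1^2" unfolding m2 using p2 by (simp add: field_simps)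
  have hm3: "2 * Fc u1 u2 = u1 + u2" unfolding m3 by simp
  have "(S * K) * ((u1-u2)*(v1-v3) - (u1-u3)*(v1-v2)) = (K - u3^2) * ((u1-u2)*(v1-v3) - (u1-u3)*(v1-v2))"
    using h hm1 hm2 hm3 unfolding K_def by algebra
  then have SK: "S * K = K - u3^2" using E by simp
  have "u3^2 \<le> K" unfolding power2_eq_square K_def
    using mult_mono[of "-u3" "u1-u3" "-u3" "u2-u3"] s by auto
  moreover have "S = (K - u3^2)/K" using SK K by (auto simp: field_simps)
  ultimately show ?thesis using K by (simp add: divide_le_eq_1 zero_le_divide_iff)
qed

lemma S_bound:
  fixes C S B u1 u2 u3 v1 v2 v3 :: real
  assumes E: "(u1-u2)*(v1-v3) - (u1-u3)*(v1-v2) \<noteq> 0"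
    and e: "C + S*((u2+u3)/2) + B*((v2+v3)/2) = Fc u2 u3"
    "C + S*((u3+u1)/2) + B*((v3+v1)/2) = Fc u3 u1"
    "C + S*((u1+u2)/2) + B*((v1+v2)/2) = Fc u1 u2"
    and pos: "0 < u1 \<or> 0 < u2 \<or> 0 < u3" and neg: "u1 < 0 \<or> u2 < 0 \<or> u3 < 0"
  shows "0 \<le> S \<and> S \<le> 1"
proof -
  have E2: "(u2-u3)*(v2-v1) - (u2-u1)*(v2-v3) \<noteq> 0" using E by (simp add: algebra_simps)
  have E3: "(u3-u1)*(v3-v2) - (u3-u2)*(v3-v1) \<noteq> 0" using E by (simp add: algebra_simps)
  note A1 = one_pos[OF E e] two_pos[OF E e]
  note A2 = one_pos[OF E2 e(2) e(3) e(1)] two_pos[OF E2 e(2) e(3) e(1)]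
  note A3 = one_pos[OF E3 e(3) e(1) e(2)] two_pos[OF E3 e(3) e(1) e(2)]
  show ?thesis
    using pos neg A1 A2 A3 by linarith
qed

lemma norm1: "norm (n::pt) = 1 \<Longrightarrow> fst n ^ 2 + snd n ^ 2 = 1"
  by (cases n) (simp add: norm_Pair)

lemma infdist_line:
  fixes n p p' x :: pt
  assumes n: "fst n ^ 2 + snd n ^ 2 = 1" and o: "n \<bullet> (p' - p) = 0" and pp: "p \<noteq> p'"
  shows "infdist x (affine hull {p, p'}) = \<bar>n \<bullet> (x - p)\<bar>"
proof -
  let ?A = "affine hull {p, p'}"
  have A0: "n \<bullet> (y - p) = 0" if "y \<in> ?A" for y
  proof -
    from that obtain u v where uv: "u + v = 1" "y = u *\<^sub>R p + v *\<^sub>R p'"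
      unfolding affine_hull_2 by blast
    have "u = 1 - v" using uv by simp
    then have "y = (1 - v) *\<^sub>R p + v *\<^sub>R p'" using uv(2) by simp
    then have "y - p = v *\<^sub>R (p' - p)" by (simp add: algebra_simps)
    then show ?thesis using o by (simp add: inner_diff_right)
  qed
  have ne: "?A \<noteq> {}" by (simp add: hull_inc)
  have ge: "\<bar>n \<bullet> (x - p)\<bar> \<le> infdist x ?A"
    unfolding infdist_notempty[OF ne]
  proof (rule cINF_greatest[OF ne])
    fix y assume y: "y \<in> ?A"
    have "n \<bullet> (x - p) = n \<bullet> (x - y) + n \<bullet> (y - p)" by (simp add: inner_diff_right)
    also have "\<dots> = n \<bullet> (x - y)" using A0[OF y] by simp
    finally have "\<bar>n \<bullet> (x - p)\<bar> \<le> norm n * norm (x - y)"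
      using Cauchy_Schwarz_ineq2[of n "x - y"] by simp
    moreover have "norm n = 1" using n by (cases n) (simp add: norm_Pair)
    ultimately show "\<bar>n \<bullet> (x - p)\<bar> \<le> dist x y" by (simp add: dist_norm)
  qed
  obtain n1 n2 where nn: "n = (n1, n2)" by (cases n) auto
  obtain p1 p2 where pe: "p = (p1, p2)" by (cases p) auto
  obtain q1 q2 where qe: "p' = (q1, q2)" by (cases p') auto
  obtain x1 x2 where xe: "x = (x1, x2)" by (cases x) auto
  have n': "n1^2 + n2^2 = 1" using n nn by simp
  have o': "n1 * (q1 - p1) + n2 * (q2 - p2) = 0" using o nn pe qe by simp
  define td where "td = n2 * (q1 - p1) - n1 * (q2 - p2)"
  have td: "td \<noteq> 0"
  proof
    assume "td = 0"
    have "q1 - p1 = n1 * (n1 * (q1 - p1) + n2 * (q2 - p2)) + n2 * td" using n' unfolding td_def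
      by algebra
    moreover have "q2 - p2 = n2 * (n1 * (q1 - p1) + n2 * (q2 - p2)) - n1 * td" using n' unfolding td_def
      by algebra
    ultimately have "q1 = p1" "q2 = p2" using o' \<open>td = 0\<close> by auto
    then show False using pp pe qe by simp
  qed
  define l where "l = n1 * (x1 - p1) + n2 * (x2 - p2)"
  define tx where "tx = n2 * (x1 - p1) - n1 * (x2 - p2)"
  define s where "s = tx / td"
  define y0 where "y0 = x - l *\<^sub>R n"
  have c1: "x1 - l * n1 = (1 - s) * p1 + s * q1"
  proof -
    have "x1 - l * n1 = p1 + tx * n2" unfolding l_def tx_def using n' by algebra
    moreover have "s * (q1 - p1) = tx * n2"
    proof -
      have "td * (q1 - p1) = td * n2 * td" unfolding td_def using n' o' by algebra
      then have "q1 - p1 = n2 * td" using td by simp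
      then show ?thesis unfolding s_def using td by simp
    qed
    ultimately show ?thesis by (simp add: algebra_simps)
  qed
  have c2: "x2 - l * n2 = (1 - s) * p2 + s * q2"
  proof -
    have "x2 - l * n2 = p2 - tx * n1" unfolding l_def tx_def using n' by algebra
    moreover have "s * (q2 - p2) = - tx * n1"
    proof -
      have "td * (q2 - p2) = td * (- n1 * td)" unfolding td_def using n' o' by algebra
      then have "q2 - p2 = - n1 * td" using td mult_left_cancel by blast
      then show ?thesis unfolding s_def using td by simp
    qed
    ultimately show ?thesis by (simp add: algebra_simps)
  qed
  have "y0 = (1 - s) *\<^sub>R p + s *\<^sub>R p'"
    unfolding y0_def using c1 c2 nn pe qe xe l_def by simp
  then have y0A: "y0 \<in> ?A" unfolding affine_hull_2
    by (intro CollectI exI[of _ "1 - s"] exI[of _ s]) simp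
  have lx: "n \<bullet> (x - p) = l" unfolding l_def nn pe xe by simp
  have "infdist x ?A \<le> dist x y0" by (rule infdist_le[OF y0A])
  also have "dist x y0 = \<bar>l\<bar> * norm n" unfolding y0_def dist_norm by simp
  also have "norm n = 1" using n' nn by (simp add: norm_Pair)
  finally show ?thesis using ge lx by simp
qed

lemma P1_eval: "P1 f \<Longrightarrow> f x = f 0 + pd1 f * fst x + pd2 f * snd x"
  by (subst P1_form, assumption) (simp add: aff_def)

lemma pd_lin:
  assumes "P1 g" "P1 h" "\<And>x. f x = g x + k * h x"
  shows "P1 f \<and> pd1 f = pd1 g + k * pd1 h \<and> pd2 f = pd2 g + k * pd2 h"
proof -
  have "f = aff (g 0 + k * h 0) (pd1 g + k * pd1 h) (pd2 g + k * pd2 h)"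
  proof
    fix x show "f x = aff (g 0 + k * h 0) (pd1 g + k * pd1 h) (pd2 g + k * pd2 h) x"
      using assms(3)[of x] P1_eval[OF assms(1), of x] P1_eval[OF assms(2), of x]
      by (simp add: aff_def algebra_simps)
  qed
  then show ?thesis by (simp add: P1_aff pd_aff)
qed

lemma ell_aff: "(\<lambda>x. (n::pt) \<bullet> (x - p)) = aff (- (n \<bullet> p)) (fst n) (snd n)"
proof
  fix x :: pt
  show "n \<bullet> (x - p) = aff (- (n \<bullet> p)) (fst n) (snd n) x"
    by (cases n, cases x, cases p) (simp add: aff_def algebra_simps)
qed

lemma P1_ell: "P1 (\<lambda>x. (n::pt) \<bullet> (x - p))" "pd1 (\<lambda>x. (n::pt) \<bullet> (x - p)) = fst n"
   "pd2 (\<lambda>x. (n::pt) \<bullet> (x - p)) = snd n"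
  unfolding ell_aff by (simp_all add: P1_aff pd_aff)

lemma P1_const: "P1 (\<lambda>x. c)" "pd1 (\<lambda>x. c) = 0" "pd2 (\<lambda>x. c) = 0"
proof -
  have e: "(\<lambda>x::pt. c) = aff c 0 0" by (simp add: aff_def)
  show "P1 (\<lambda>x. c)" "pd1 (\<lambda>x. c) = 0" "pd2 (\<lambda>x. c) = 0" unfolding e by (simp_all add: P1_aff pd_aff)
qed

lemma alg_bt:
  fixes b1 b2 n1 n2 p1 p2 q1 q2 :: real
  assumes n': "n1^2 + n2^2 = 1" and o': "n1 * (q1 - p1) + n2 * (q2 - p2) = 0" and bd: "b1 * (q1 - p1) + b2 * (q2 - p2) = 0"
  shows "(b1 * n2 - b2 * n1) * (n2 * (q1 - p1) - n1 * (q2 - p2)) = 0" using n' o' bd by algebra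

lemma alg_fin:
  fixes b1 b2 n1 n2 p1 p2 c x1 x2 :: real
  assumes  n': "n1^2 + n2^2 = 1" and fp: "c + b1 * p1 + b2 * p2 = 0" and bt: "b1 * n2 - b2 * n1 = 0"
  shows "c + b1 * x1 + b2 * x2 = (b1 * n1 + b2 * n2) * (n1 * (x1 - p1) + n2 * (x2 - p2))"
    using fp bt n' by algebra

lemma alg_td1:
  fixes n1 n2 p1 p2 q1 q2 :: real
  assumes n': "n1^2 + n2^2 = 1"
  shows "q1 - p1 = n1 * (n1 * (q1 - p1) + n2 * (q2 - p2)) + n2 * (n2 * (q1 - p1) - n1 * (q2 - p2))"
    "q2 - p2 = n2 * (n1 * (q1 - p1) + n2 * (q2 - p2)) - n1 * (n2 * (q1 - p1) - n1 * (q2 - p2))"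
  using n' by algebra+

lemma aff_zero_line:
  fixes n p p' :: pt
  assumes f: "P1 f" and z: "\<forall>x\<in>open_segment p p'. f x = 0" and pp: "p \<noteq> p'"
    and o: "n \<bullet> (p' - p) = 0" and nn: "fst n ^ 2 + snd n ^ 2 = 1"
  shows "f x = (pd1 f * fst n + pd2 f * snd n) * (n \<bullet> (x - p))"
proof -
  have m1: "(1 - 1/2) *\<^sub>R p + (1/2) *\<^sub>R p' \<in> open_segment p p'"
    unfolding in_segment using pp by (intro conjI exI[of _ "1/2"]) auto
  have m2: "(1 - 1/4) *\<^sub>R p + (1/4) *\<^sub>R p' \<in> open_segment p p'"
    unfolding in_segment using pp by (intro conjI exI[of _ "1/4"]) auto
  obtain n1 n2 where nn': "n = (n1, n2)" by (cases n) auto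
  obtain p1 p2 where pe: "p = (p1, p2)" by (cases p) auto
  obtain q1 q2 where qe: "p' = (q1, q2)" by (cases p') auto
  obtain x1 x2 where xe: "x = (x1, x2)" by (cases x) auto
  define c where "c = f 0"
  define b1 where "b1 = pd1 f"
  define b2 where "b2 = pd2 f"
  have fe: "\<And>y. f y = c + b1 * fst y + b2 * snd y" unfolding c_def b1_def b2_def using P1_eval[OF f] by blast
  have e1: "c + b1 * ((1 - 1/2) * p1 + (1/2) * q1) + b2 * ((1 - 1/2) * p2 + (1/2) * q2) = 0"
    using z m1 fe[of "(1 - 1/2) *\<^sub>R p + (1/2) *\<^sub>R p'"] pe qe by simp
  have e2: "c + b1 * ((1 - 1/4) * p1 + (1/4) * q1) + b2 * ((1 - 1/4) * p2 + (1/4) * q2) = 0"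
    using z m2 fe[of "(1 - 1/4) *\<^sub>R p + (1/4) *\<^sub>R p'"] pe qe by simp
  have "(c + b1 * ((1 - 1/2) * p1 + (1/2) * q1) + b2 * ((1 - 1/2) * p2 + (1/2) * q2)) -
       (c + b1 * ((1 - 1/4) * p1 + (1/4) * q1) + b2 * ((1 - 1/4) * p2 + (1/4) * q2)) = (b1 * (q1 - p1) + b2 * (q2 - p2))/4"
    by (simp add: algebra_simps)
  then have bd: "b1 * (q1 - p1) + b2 * (q2 - p2) = 0" using e1 e2 by simp
  have "c + b1 * p1 + b2 * p2 = (c + b1 * ((1 - 1/2) * p1 + (1/2) * q1) + b2 * ((1 - 1/2) * p2 + (1/2) * q2)) - (b1 * (q1 - p1) + b2 * (q2 - p2))/2"
    by (simp add: field_simps)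
  then have fp: "c + b1 * p1 + b2 * p2 = 0" using e1 bd by simp
  have n': "n1^2 + n2^2 = 1" using nn nn' by simp
  have o': "n1 * (q1 - p1) + n2 * (q2 - p2) = 0" using o nn' pe qe by simp
  define td where "td = n2 * (q1 - p1) - n1 * (q2 - p2)"
  have td: "td \<noteq> 0"
  proof
    assume "td = 0"
    have "q1 - p1 = n1 * (n1 * (q1 - p1) + n2 * (q2 - p2)) + n2 * td"
      unfolding td_def by (rule alg_td1[OF n'])
    moreover have "q2 - p2 = n2 * (n1 * (q1 - p1) + n2 * (q2 - p2)) - n1 * td"
      unfolding td_def by (rule alg_td1[OF n'])
    ultimately have "q1 = p1" "q2 = p2" using o' \<open>td = 0\<close> by auto
    then show False using pp pe qe by simp
  qed
  have "(b1 * n2 - b2 * n1) * td = 0" unfolding td_def by (rule alg_bt[OF n' o' bd])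
  then have bt: "b1 * n2 - b2 * n1 = 0" using td by simp
  have "c + b1 * x1 + b2 * x2 = (b1 * n1 + b2 * n2) * (n1 * (x1 - p1) + n2 * (x2 - p2))"
    by (rule alg_fin[OF n' fp bt])
  then show ?thesis using fe[of x] unfolding b1_def[symmetric] b2_def[symmetric] nn' pe xe by simp
qed

lemma hull_lin:
  fixes n p x :: pt
  assumes "x \<in> convex hull {a1, a2, a3}"
  shows "\<exists>u v w. 0 \<le> u \<and> 0 \<le> v \<and> 0 \<le> w \<and> u + v + w = 1 \<and>
     n \<bullet> (x - p) = u * (n \<bullet> (a1 - p)) + v * (n \<bullet> (a2 - p)) + w * (n \<bullet> (a3 - p))"
proof -
  from assms obtain u v w where uvw: "0 \<le> u" "0 \<le> v" "0 \<le> w" "u + v + w = 1"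
    "x = u *\<^sub>R a1 + v *\<^sub>R a2 + w *\<^sub>R a3" unfolding convex_hull_3 by blast
  have "u *\<^sub>R p + v *\<^sub>R p + w *\<^sub>R p = (u + v + w) *\<^sub>R p" by (simp add: scaleR_add_left)
  then have pp: "u *\<^sub>R p + v *\<^sub>R p + w *\<^sub>R p = p" using uvw(4) by simp
  have "x - p = (u *\<^sub>R a1 + v *\<^sub>R a2 + w *\<^sub>R a3) - (u *\<^sub>R p + v *\<^sub>R p + w *\<^sub>R p)"
    using uvw(5) pp by simp
  also have "\<dots> = u *\<^sub>R (a1 - p) + v *\<^sub>R (a2 - p) + w *\<^sub>R (a3 - p)" by (simp add: algebra_simps)
  finally have "x - p = u *\<^sub>R (a1 - p) + v *\<^sub>R (a2 - p) + w *\<^sub>R (a3 - p)" .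
  then have "n \<bullet> (x - p) = u * (n \<bullet> (a1 - p)) + v * (n \<bullet> (a2 - p)) + w * (n \<bullet> (a3 - p))"
    by (simp add: inner_add_right)
  with uvw show ?thesis by blast
qed

lemma vertex_pos:
  fixes n p :: pt
  assumes "x \<in> convex hull {a1, a2, a3}" "n \<bullet> (x - p) > 0"
  shows "n \<bullet> (a1 - p) > 0 \<or> n \<bullet> (a2 - p) > 0 \<or> n \<bullet> (a3 - p) > 0"
proof (rule ccontr)
  assume "\<not> ?thesis"
  then have h: "n \<bullet> (a1 - p) \<le> 0" "n \<bullet> (a2 - p) \<le> 0" "n \<bullet> (a3 - p) \<le> 0" by auto
  obtain u v w where uvw: "0 \<le> u" "0 \<le> v" "0 \<le> w"
    "n \<bullet> (x - p) = u * (n \<bullet> (a1 - p)) + v * (n \<bullet> (a2 - p)) + w * (n \<bullet> (a3 - p))"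
    using hull_lin[OF assms(1), of n p] by blast
  have "u * (n \<bullet> (a1 - p)) \<le> 0" "v * (n \<bullet> (a2 - p)) \<le> 0" "w * (n \<bullet> (a3 - p)) \<le> 0"
    using uvw h by (simp_all add: mult_nonneg_nonpos)
  then show False using uvw(4) assms(2) by linarith
qed

lemma vertex_neg:
  fixes n p :: pt
  assumes "x \<in> convex hull {a1, a2, a3}" "n \<bullet> (x - p) < 0"
  shows "n \<bullet> (a1 - p) < 0 \<or> n \<bullet> (a2 - p) < 0 \<or> n \<bullet> (a3 - p) < 0"
  using vertex_pos[OF assms(1), of "-n" p] assms(2) by simp

lemma cont_P1: "P1 g \<Longrightarrow> continuous_on S (\<lambda>s::real. g (a + s *\<^sub>R (b - a)))"
  by (subst P1_form, assumption) (auto simp: aff_def intro!: continuous_intros)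

lemma edge_avg_piece:
  fixes a b n p :: pt and f g :: "pt \<Rightarrow> real"
  assumes seg: "\<And>s. s \<in> {0..1} \<Longrightarrow> a + s *\<^sub>R (b - a) \<in> T"
    and nz: "\<not> (n \<bullet> (a - p) = 0 \<and> n \<bullet> (b - p) = 0)"
    and g: "P1 g"
    and fg: "\<And>x. x \<in> T \<Longrightarrow> n \<bullet> (x - p) \<noteq> 0 \<Longrightarrow> f x = g x + k * max 0 (n \<bullet> (x - p))"
  shows "edge_avg a b f = edge_avg a b g + k * Fc (n \<bullet> (a - p)) (n \<bullet> (b - p))"
proof -
  define la where "la = n \<bullet> (a - p)"
  define lb where "lb = n \<bullet> (b - p)"
  have lin: "n \<bullet> (a + s *\<^sub>R (b - a) - p) = la + s * (lb - la)" for s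
    unfolding la_def lb_def by (simp add: inner_diff_right inner_add_right algebra_simps)
  have "edge_avg a b f = integral {0..1} (\<lambda>s. g (a + s *\<^sub>R (b - a)) + k * max 0 (la + s * (lb - la)))"
    unfolding edge_avg_def
  proof (rule integral_spike[of "{la / (la - lb)}"])
    show "negligible {la / (la - lb)}" by simp
    fix s assume s: "s \<in> {0..1} - {la / (la - lb)}"
    have ne: "la + s * (lb - la) \<noteq> 0"
    proof
      assume h: "la + s * (lb - la) = 0"
      show False
      proof (cases "la = lb")
        case True then show ?thesis using h nz unfolding la_def lb_def by simp
      next
        case False
        then have "s = la / (la - lb)" using h by (simp add: field_simps)
        then show ?thesis using s by simp
      qed
    qed
    show "g (a + s *\<^sub>R (b - a)) + k * max 0 (la + s * (lb - la)) = f (a + s *\<^sub>R (b - a))"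
      using fg[OF seg] s ne lin by auto
  qed
  also have "\<dots> = integral {0..1} (\<lambda>s. g (a + s *\<^sub>R (b - a))) + integral {0..1} (\<lambda>s. k * max 0 (la + s * (lb - la)))"
    by (intro integral_add integrable_continuous_interval cont_P1[OF g] continuous_intros)
  also have "\<dots> = edge_avg a b g + k * Fc la lb"
    unfolding edge_avg_def integral_mult_right int_max0 by simp
  finally show ?thesis unfolding la_def lb_def .
qed

lemma stress_alg:
  fixes n1 n2 c g1 g2 J11 J12 J21 J22 mup mum qp qm A11 A12 A21 A22 B11 B12 B21 B22 :: real
  assumes nn: "n1^2 + n2^2 = 1" and mup: "mup > 0"
    and A: "A11 = J11 - c*n2*g1" "A12 = J12 - c*n2*g2" "A21 = J21 + c*n1*g1" "A22 = J22 + c*n1*g2"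
    and B: "B11 = A11 + c*n2*n1" "B12 = A12 + c*n2*n2" "B21 = A21 - c*n1*n1" "B22 = A22 - c*n1*n2"
    and s1: "(2*mup*(B11*n1 + (B12+B21)/2*n2) - qp*n1) - (2*mum*(A11*n1 + (A12+A21)/2*n2) - qm*n1) = 0"
    and s2: "(2*mup*((B12+B21)/2*n1 + B22*n2) - qp*n2) - (2*mum*((A12+A21)/2*n1 + A22*n2) - qm*n2) = 0"
  shows "(2*(mum-mup)*(J11*n1 + (J12+J21)/2*n2) - 0*n1)*n1 + (2*(mum-mup)*((J12+J21)/2*n1 + J22*n2) - 0*n2)*n2 = qm - qp"
    and "c * (1 + (mum/mup - 1)*(g1*n1 + g2*n2)) =
         (2*(mum/mup-1)*(J11*n1 + (J12+J21)/2*n2) - 0*n1)*n2 + (2*(mum/mup-1)*((J12+J21)/2*n1 + J22*n2) - 0*n2)*(-n1)"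
proof -
  have s1': "2*mup*(B11*n1 + (B12+B21)/2*n2) - qp*n1 - (2*mum*(A11*n1 + (A12+A21)/2*n2) - qm*n1) = 0" using s1 by simp
  show "(2*(mum-mup)*(J11*n1 + (J12+J21)/2*n2) - 0*n1)*n1 + (2*(mum-mup)*((J12+J21)/2*n1 + J22*n2) - 0*n2)*n2 = qm - qp"
    using nn A B s1 s2 by algebra
  have "mup * (c * (1 + (mum/mup - 1)*(g1*n1 + g2*n2))) = c * (mup + (mum - mup)*(g1*n1 + g2*n2))"
    using mup by (simp add: field_simps)
  also have "\<dots> = 2*(mum-mup)*(J11*n1 + (J12+J21)/2*n2)*n2 - 2*(mum-mup)*((J12+J21)/2*n1 + J22*n2)*n1"
    using nn A B s1 s2 by algebra
  also have "\<dots> = mup * ((2*(mum/mup-1)*(J11*n1 + (J12+J21)/2*n2) - 0*n1)*n2 + (2*(mum/mup-1)*((J12+J21)/2*n1 + J22*n2) - 0*n2)*(-n1))"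
    using mup by (simp add: field_simps)
  finally show "c * (1 + (mum/mup - 1)*(g1*n1 + g2*n2)) =
         (2*(mum/mup-1)*(J11*n1 + (J12+J21)/2*n2) - 0*n1)*n2 + (2*(mum/mup-1)*((J12+J21)/2*n1 + J22*n2) - 0*n2)*(-n1)"
    using mup by simp
qed

lemma Tp_lmeas: "compact (T::pt set) \<Longrightarrow> {x\<in>T. 0 < n \<bullet> (x-p)} \<in> lmeasurable"
proof -
  assume T: "compact T"
  have e: "{x\<in>T. 0 < n \<bullet> (x-p)} = T \<inter> {x. n \<bullet> x > n \<bullet> p}" by (auto simp: inner_diff_right)
  have "{x. n \<bullet> x > n \<bullet> p} \<in> sets lebesgue" using open_halfspace_gt[of "n \<bullet> p" n] by simp
  then show ?thesis unfolding e using lmeasurable_compact[OF T] by (intro fmeasurable_Int_fmeasurable)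
qed

lemma meas_pos: fixes T :: "pt set" assumes "T \<in> lmeasurable" "ball x r \<subseteq> T" "r > 0" shows "measure lebesgue T > 0"
proof -
  have "0 < measure lborel (ball x r)" using content_ball_pos[OF assms(3)] by simp
  also have "measure lborel (ball x r) = measure lebesgue (ball x r)" by simp
  also have "\<dots> \<le> measure lebesgue T"
    by (rule measure_mono_fmeasurable[OF assms(2)]) (use assms(1) in auto)
  finally show ?thesis .
qed

lemma q_mean:
  fixes T :: "pt set" and n p :: pt and q :: "pt \<Rightarrow> real"
  assumes T: "compact T" and pos: "measure lebesgue T > 0" and n0: "n \<noteq> 0"
    and qp: "\<And>x. x \<in> T \<Longrightarrow> n \<bullet> (x - p) > 0 \<Longrightarrow> q x = qp"
    and qm: "\<And>x. x \<in> T \<Longrightarrow> n \<bullet> (x - p) < 0 \<Longrightarrow> q x = qm"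
    and z: "z = (\<lambda>x. if x \<in> {x\<in>T. 0 < n \<bullet> (x-p)} then -1 else (0::real))"
  shows "mean T q = qm - (qp - qm) * mean T z"
proof -
  define Tp where "Tp = {x\<in>T. 0 < n \<bullet> (x-p)}"
  have TpL: "Tp \<in> lmeasurable" unfolding Tp_def by (rule Tp_lmeas[OF T])
  have TL: "T \<in> lmeasurable" by (rule lmeasurable_compact[OF T])
  have zT: "z integrable_on T"
  proof (rule integrable_on_superset)
    show "z integrable_on Tp"
      by (rule integrable_eq[OF integrable_on_const[OF TpL, of "-1"]]) (simp add: z Tp_def)
    show "\<And>x. x \<notin> Tp \<Longrightarrow> z x = 0" by (simp add: z Tp_def)
    show "Tp \<subseteq> T" unfolding Tp_def by auto
  qed
  have neg: "negligible {x. n \<bullet> x = n \<bullet> p}" using n0 by (intro negligible_hyperplane) simp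
  have "integral T q = integral T (\<lambda>x. qm - (qp - qm) * z x)"
  proof (rule integral_spike[OF neg])
    fix x assume x: "x \<in> T - {x. n \<bullet> x = n \<bullet> p}"
    then have "n \<bullet> (x - p) \<noteq> 0" by (simp add: inner_diff_right)
    then consider "n \<bullet> (x - p) > 0" | "n \<bullet> (x - p) < 0" by linarith
    then show "qm - (qp - qm) * z x = q x"
      by cases (use x qp qm in \<open>auto simp: z\<close>)
  qed
  also have "\<dots> = integral T (\<lambda>x. qm) - integral T (\<lambda>x. (qp - qm) * z x)"
    by (rule integral_diff) (use integrable_on_const[OF TL] integrable_on_cmult_left[OF zT] in auto)
  also have "integral T (\<lambda>x. qm) = qm * measure lebesgue T"
    using lmeasure_integral[OF TL] integral_mult_right[of T qm "\<lambda>x. 1"] by simp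
  finally have I: "integral T q = qm * measure lebesgue T - (qp - qm) * integral T z" by simp
  show ?thesis unfolding mean_def I using pos by (simp add: field_simps)
qed

lemma interior_tri:
  assumes "\<not> collinear {a1, a2, a3::pt}"
  shows "\<exists>x r. r > 0 \<and> ball x r \<subseteq> convex hull {a1, a2, a3}"
proof -
  have d: "a1 \<noteq> a2" "a1 \<noteq> a3" "a2 \<noteq> a3" using assms by (auto simp: insert_commute)
  have card: "card {a1, a2, a3} = Suc DIM(pt)" using d by simp
  have "\<not> affine_dependent {a1, a2, a3}" using assms collinear_3_eq_affine_dependent by blast
  then have "interior (convex hull {a1, a2, a3}) \<noteq> {}" using interior_convex_hull_eq_empty[OF card] by blast
  then obtain x where "x \<in> interior (convex hull {a1, a2, a3})" by blast
  then obtain r where "r > 0" "ball x r \<subseteq> convex hull {a1, a2, a3}" using mem_interior by blast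
  then show ?thesis by blast
qed

lemma seg_in_hull:
  assumes "a \<in> {a1, a2, a3}" "b \<in> {a1, a2, a3}" "s \<in> {0..1}"
  shows "a + s *\<^sub>R (b - a) \<in> convex hull {a1, a2, a3::pt}"
proof -
  have "a + s *\<^sub>R (b - a) = (1 - s) *\<^sub>R a + s *\<^sub>R b" by (simp add: algebra_simps)
  moreover have "(1 - s) *\<^sub>R a + s *\<^sub>R b \<in> convex hull {a1, a2, a3}"
    using assms by (intro convexD[OF convex_convex_hull] hull_inc) auto
  ultimately show ?thesis by simp
qed

lemma eavg_piece:
  fixes n p :: pt and f g :: "pt \<Rightarrow> real"
  assumes pos: "n \<bullet> (a1 - p) > 0 \<or> n \<bullet> (a2 - p) > 0 \<or> n \<bullet> (a3 - p) > 0"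
    and neg: "n \<bullet> (a1 - p) < 0 \<or> n \<bullet> (a2 - p) < 0 \<or> n \<bullet> (a3 - p) < 0"
    and g: "P1 g"
    and fg: "\<And>x. x \<in> convex hull {a1, a2, a3} \<Longrightarrow> n \<bullet> (x - p) \<noteq> 0 \<Longrightarrow> f x = g x + k * max 0 (n \<bullet> (x - p))"
    and j: "j \<in> {1, 2, 3}"
  shows "eavg a1 a2 a3 j f = eavg a1 a2 a3 j g +
           k * Fc (n \<bullet> (fst (edge a1 a2 a3 j) - p)) (n \<bullet> (snd (edge a1 a2 a3 j) - p))"
proof -
  have gen: "edge_avg a b f = edge_avg a b g + k * Fc (n \<bullet> (a - p)) (n \<bullet> (b - p))"
    if "a \<in> {a1, a2, a3}" "b \<in> {a1, a2, a3}" "\<not> (n \<bullet> (a - p) = 0 \<and> n \<bullet> (b - p) = 0)" for a b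
    by (rule edge_avg_piece[OF seg_in_hull[OF that(1,2)] that(3) g fg])
  from j consider "j = 1" | "j = 2" | "j = 3" by auto
  then show ?thesis
  proof cases
    case 1
    have "\<not> (n \<bullet> (a2 - p) = 0 \<and> n \<bullet> (a3 - p) = 0)" using pos neg by auto
    then show ?thesis using gen[of a2 a3] 1 unfolding eavg_def edge_def by simp
  next
    case 2
    have "\<not> (n \<bullet> (a3 - p) = 0 \<and> n \<bullet> (a1 - p) = 0)" using pos neg by auto
    then show ?thesis using gen[of a3 a1] 2 unfolding eavg_def edge_def by simp
  next
    case 3
    have "\<not> (n \<bullet> (a1 - p) = 0 \<and> n \<bullet> (a2 - p) = 0)" using pos neg by auto
    then show ?thesis using gen[of a1 a2] 3 unfolding eavg_def edge_def by simp
  qed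
qed

lemma alg_kappa:
  fixes n1 n2 k1 k2 :: real
  assumes "n1^2 + n2^2 = 1" "k1 * n1 + k2 * n2 = 0"
  shows "k1 = (k1 * n2 - k2 * n1) * n2" "k2 = - (k1 * n2 - k2 * n1) * n1"
  using assms by algebra+

lemma alg_rot0:
  fixes hO bA bB nA nB yA yB pA pB :: real
  assumes "nA^2 + nB^2 = 1"
  shows "hO + bA * yA + bB * yB = (hO + bA * pA + bB * pB) + (bA * nA + bB * nB) * (nA * (yA - pA) + nB * (yB - pB))
           + (bA * nB - bB * nA) * (nB * (yA - pA) - nA * (yB - pB))"
  using assms by algebra

lemma alg_rot:
  fixes n p y :: pt
  assumes h: "P1 h" and nn: "fst n ^ 2 + snd n ^ 2 = 1"
  shows "h y = h p + (pd1 h * fst n + pd2 h * snd n) * (n \<bullet> (y - p))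
           + (pd1 h * snd n - pd2 h * fst n) * ((snd n, - fst n) \<bullet> (y - p))"
proof -
  obtain n1 n2 where ne: "n = (n1, n2)" by (cases n)
  obtain p1 p2 where pe: "p = (p1, p2)" by (cases p)
  obtain y1 y2 where ye: "y = (y1, y2)" by (cases y)
  show ?thesis
    using alg_rot0[where nA=n1 and nB=n2 and hO="h 0" and bA="pd1 h" and bB="pd2 h" and yA=y1 and yB=y2 and pA=p1 and pB=p2] nn P1_eval[OF h, of y] P1_eval[OF h, of p]
    unfolding ne pe ye by (simp add: algebra_simps)
qed

lemma alg_E0:
  fixes nA nB xA yA xB yB xC yC pA pB :: real
  assumes "nA^2 + nB^2 = 1"
  shows "((nA * (xA - pA) + nB * (yA - pB)) - (nA * (xB - pA) + nB * (yB - pB))) *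
           ((nB * (xA - pA) - nA * (yA - pB)) - (nB * (xC - pA) - nA * (yC - pB)))
       - ((nA * (xA - pA) + nB * (yA - pB)) - (nA * (xC - pA) + nB * (yC - pB))) *
           ((nB * (xA - pA) - nA * (yA - pB)) - (nB * (xB - pA) - nA * (yB - pB)))
       = - ((xB - xA) * (yC - yA) - (yB - yA) * (xC - xA))"
  using assms by algebra

lemma alg_E:
  fixes n p a1 a2 a3 :: pt
  assumes nn: "fst n ^ 2 + snd n ^ 2 = 1"
  defines "u \<equiv> \<lambda>a. n \<bullet> (a - p)" and "w \<equiv> \<lambda>a. (snd n, - fst n) \<bullet> (a - p)"
  shows "(u a1 - u a2) * (w a1 - w a3) - (u a1 - u a3) * (w a1 - w a2) = - crs a1 a2 a3"
proof -
  obtain n1 n2 where ne: "n = (n1, n2)" by (cases n)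
  obtain p1 p2 where pe: "p = (p1, p2)" by (cases p)
  obtain x1 y1 where e1: "a1 = (x1, y1)" by (cases a1)
  obtain x2 y2 where e2: "a2 = (x2, y2)" by (cases a2)
  obtain x3 y3 where e3: "a3 = (x3, y3)" by (cases a3)
  show ?thesis using alg_E0[where nA=n1 and nB=n2 and xA=x1 and yA=y1 and xB=x2 and yB=y2 and xC=x3 and yC=y3 and pA=p1 and pB=p2] nn
    unfolding u_def w_def ne pe e1 e2 e3 crs_def by simp
qed

lemma stress_alg2:
  fixes nA nB c gA gB Jaa Jab Jba Jbb mup mum qp qm Aaa Aab Aba Abb Baa Bab Bba Bbb :: real
  assumes nn: "nA^2 + nB^2 = 1" and mup: "mup > 0"
    and A: "Aaa = Jaa - c*nB*gA" "Aab = Jab - c*nB*gB" "Aba = Jba + c*nA*gA" "Abb = Jbb + c*nA*gB"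
    and B: "Baa = Aaa + c*nB*nA" "Bab = Aab + c*nB*nB" "Bba = Aba - c*nA*nA" "Bbb = Abb - c*nA*nB"
    and s1: "(2*mup*(Baa*nA + (Bab+Bba)/2*nB) - qp*nA) - (2*mum*(Aaa*nA + (Aab+Aba)/2*nB) - qm*nA) = 0"
    and s2: "(2*mup*((Bab+Bba)/2*nA + Bbb*nB) - qp*nB) - (2*mum*((Aab+Aba)/2*nA + Abb*nB) - qm*nB) = 0"
  shows "(2*(mum-mup)*(Jaa*nA + (Jab+Jba)/2*nB) - 0*nA)*nA + (2*(mum-mup)*((Jab+Jba)/2*nA + Jbb*nB) - 0*nB)*nB = qm - qp"
    and "c * (1 + (mum/mup - 1)*(gA*nA + gB*nB)) =
         (2*(mum/mup-1)*(Jaa*nA + (Jab+Jba)/2*nB) - 0*nA)*nB + (2*(mum/mup-1)*((Jab+Jba)/2*nA + Jbb*nB) - 0*nB)*(-nA)"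
proof -
  have s1': "2*mup*(Baa*nA + (Bab+Bba)/2*nB) - qp*nA - (2*mum*(Aaa*nA + (Aab+Aba)/2*nB) - qm*nA) = 0" using s1 by simp
  show "(2*(mum-mup)*(Jaa*nA + (Jab+Jba)/2*nB) - 0*nA)*nA + (2*(mum-mup)*((Jab+Jba)/2*nA + Jbb*nB) - 0*nB)*nB = qm - qp"
    using nn A B s1 s2 by algebra
  have "mup * (c * (1 + (mum/mup - 1)*(gA*nA + gB*nB))) = c * (mup + (mum - mup)*(gA*nA + gB*nB))"
    using mup by (simp add: field_simps)
  also have "\<dots> = 2*(mum-mup)*(Jaa*nA + (Jab+Jba)/2*nB)*nB - 2*(mum-mup)*((Jab+Jba)/2*nA + Jbb*nB)*nA"
    using nn A B s1 s2 by algebra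
  also have "\<dots> = mup * ((2*(mum/mup-1)*(Jaa*nA + (Jab+Jba)/2*nB) - 0*nA)*nB + (2*(mum/mup-1)*((Jab+Jba)/2*nA + Jbb*nB) - 0*nB)*(-nA))"
    using mup by (simp add: field_simps)
  finally show "c * (1 + (mum/mup - 1)*(gA*nA + gB*nB)) =
         (2*(mum/mup-1)*(Jaa*nA + (Jab+Jba)/2*nB) - 0*nA)*nB + (2*(mum/mup-1)*((Jab+Jba)/2*nA + Jbb*nB) - 0*nB)*(-nA)"
    using mup by simp
qed


lemma rep:
  fixes a1 a2 a3 p p' n :: pt
    and T Tp Tm G :: "pt set"
    and mup mum :: real
  assumes tri: "\<not> collinear {a1, a2, a3}"
    and T_def: "T = convex hull {a1, a2, a3}"
    and endpoints: "p \<in> frontier T" "p' \<in> frontier T" "p \<noteq> p'"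
    and n_unit: "norm n = 1" and n_normal: "n \<bullet> (p' - p) = 0"
    and G_def: "G = open_segment p p'"
    and Tp_def: "Tp = {x \<in> T. n \<bullet> (x - p) > 0}"
    and Tm_def: "Tm = {x \<in> T. n \<bullet> (x - p) < 0}"
    and nonempty: "Tp \<noteq> {}" "Tm \<noteq> {}"
    and mu_pos: "mup > 0" "mum > 0"
    and ife: "IFE Tp Tm G n mup mum v q"
  shows "(let N = (\<lambda>i. Ndof a1 a2 a3 i v q);
            t = (snd n, - fst n);
            vJ0 = (\<lambda>x. (\<Sum>i\<in>{1, 2, 3}. N i * cr_basis a1 a2 a3 i x,
                        \<Sum>i\<in>{1, 2, 3}. N (i + 3) * cr_basis a1 a2 a3 i x));
            qJ0 = N 7;
            z = (\<lambda>x. if x \<in> Tp then - 1 else 0 :: real);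
            w = (\<lambda>x. if x \<in> Tp then infdist x (affine hull G) else 0);
            qJ1 = (\<lambda>x. z x - mean T z);
            vJ2 = (\<lambda>x. (w x - pi_cr a1 a2 a3 w x) *\<^sub>R t);
            c1 = sigma_n (mum - mup) vJ0 0 n \<bullet> n;
            den = 1 + (mum / mup - 1) * (grad (pi_cr a1 a2 a3 w) \<bullet> n);
            c2 = (sigma_n (mum / mup - 1) vJ0 0 n \<bullet> t) / den
        in den \<noteq> 0 \<and>
           (\<forall>x\<in>Tp \<union> Tm. v x = vJ0 x + c2 *\<^sub>R vJ2 x \<and> q x = qJ0 + c1 * qJ1 x))"
proof -
  have crs: "crs a1 a2 a3 \<noteq> 0" by (rule noncol_crs[OF tri])
  have nn: "fst n ^ 2 + snd n ^ 2 = 1" by (rule norm1[OF n_unit])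
  have n0: "n \<noteq> 0" using n_unit by auto
  obtain n1 n2 where ne: "n = (n1, n2)" by (cases n)
  have nn': "n1^2 + n2^2 = 1" using nn ne by simp
  have disj: "Tp \<inter> Tm = {}" using Tp_def Tm_def by auto
  obtain xp where "xp \<in> Tp" using nonempty by auto
  then have pos: "n \<bullet> (a1 - p) > 0 \<or> n \<bullet> (a2 - p) > 0 \<or> n \<bullet> (a3 - p) > 0"
    using vertex_pos[of xp a1 a2 a3 n p] Tp_def T_def by auto
  obtain xm where "xm \<in> Tm" using nonempty by auto
  then have neg: "n \<bullet> (a1 - p) < 0 \<or> n \<bullet> (a2 - p) < 0 \<or> n \<bullet> (a3 - p) < 0"
    using vertex_neg[of xm a1 a2 a3 n p] Tm_def T_def by auto
  from ife obtain vp vm qp qm where IF: "P1v vp" "P1v vm" "\<forall>x\<in>Tp. v x = vp x \<and> q x = qp"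
     "\<forall>x\<in>Tm. v x = vm x \<and> q x = qm"
     "sigma_n mup vp qp n - sigma_n mum vm qm n = 0" "\<forall>x\<in>G. vp x = vm x" "divg vp - divg vm = 0"
    unfolding IFE_def by blast
  define vp1 where "vp1 = (\<lambda>x. fst (vp x))"
  define vp2 where "vp2 = (\<lambda>x. snd (vp x))"
  define vm1 where "vm1 = (\<lambda>x. fst (vm x))"
  define vm2 where "vm2 = (\<lambda>x. snd (vm x))"
  have P: "P1 vp1" "P1 vp2" "P1 vm1" "P1 vm2"
    using IF(1,2) unfolding P1v_def vp1_def vp2_def vm1_def vm2_def by auto
  define \<kappa>1 where "\<kappa>1 = pd1 (\<lambda>x. vp1 x - vm1 x) * fst n + pd2 (\<lambda>x. vp1 x - vm1 x) * snd n"
  define \<kappa>2 where "\<kappa>2 = pd1 (\<lambda>x. vp2 x - vm2 x) * fst n + pd2 (\<lambda>x. vp2 x - vm2 x) * snd n"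
  have D1P: "P1 (\<lambda>x. vp1 x - vm1 x)" using pd_lin[OF P(1) P(3), of "\<lambda>x. vp1 x - vm1 x" "-1"] by simp
  have D2P: "P1 (\<lambda>x. vp2 x - vm2 x)" using pd_lin[OF P(2) P(4), of "\<lambda>x. vp2 x - vm2 x" "-1"] by simp
  have D1z: "\<forall>x\<in>open_segment p p'. (\<lambda>x. vp1 x - vm1 x) x = 0"
    using IF(6) G_def by (auto simp: vp1_def vm1_def)
  have D2z: "\<forall>x\<in>open_segment p p'. (\<lambda>x. vp2 x - vm2 x) x = 0"
    using IF(6) G_def by (auto simp: vp2_def vm2_def)
  have K1: "vp1 x = vm1 x + \<kappa>1 * (n \<bullet> (x - p))" for x
    using aff_zero_line[OF D1P D1z endpoints(3) n_normal nn, of x] unfolding \<kappa>1_def by simp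
  have K2: "vp2 x = vm2 x + \<kappa>2 * (n \<bullet> (x - p))" for x
    using aff_zero_line[OF D2P D2z endpoints(3) n_normal nn, of x] unfolding \<kappa>2_def by simp
  have pdp1: "pd1 vp1 = pd1 vm1 + \<kappa>1 * n1" "pd2 vp1 = pd2 vm1 + \<kappa>1 * n2"
    using pd_lin[OF P(3) P1_ell(1)[of n p] K1] P1_ell(2,3)[of n p] ne by auto
  have pdp2: "pd1 vp2 = pd1 vm2 + \<kappa>2 * n1" "pd2 vp2 = pd2 vm2 + \<kappa>2 * n2"
    using pd_lin[OF P(4) P1_ell(1)[of n p] K2] P1_ell(2,3)[of n p] ne by auto
  have dv: "\<kappa>1 * n1 + \<kappa>2 * n2 = 0"
    using IF(7) pdp1 pdp2 unfolding divg_def vp1_def[symmetric] vp2_def[symmetric] vm1_def[symmetric] vm2_def[symmetric]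
    by simp
  define c where "c = \<kappa>1 * n2 - \<kappa>2 * n1"
  have kc: "\<kappa>1 = c * n2" "\<kappa>2 = - c * n1" using alg_kappa[OF nn' dv] unfolding c_def by simp_all
  have vp1e: "vp1 x = vm1 x + (c * n2) * (n \<bullet> (x - p))" for x using K1[of x] kc by simp
  have vp2e: "vp2 x = vm2 x + (- c * n1) * (n \<bullet> (x - p))" for x using K2[of x] kc by simp
  define w where "w = (\<lambda>x. if x \<in> Tp then infdist x (affine hull G) else 0)"
  have ahG: "affine hull G = affine hull {p, p'}" using G_def endpoints(3) by simp
  have wT: "w x = max 0 (n \<bullet> (x - p))" if x: "x \<in> T" for x
  proof (cases "x \<in> Tp")
    case True
    then have "n \<bullet> (x - p) > 0" using Tp_def by auto
    then show ?thesis using True infdist_line[OF nn n_normal endpoints(3), of x] unfolding w_def ahG by simp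
  next
    case False
    then have "n \<bullet> (x - p) \<le> 0" using Tp_def x by auto
    then show ?thesis using False unfolding w_def by simp
  qed
  define \<pi>w where "\<pi>w = pi_cr a1 a2 a3 w"
  have piw: "P1 \<pi>w" "\<And>j. j \<in> {1,2,3} \<Longrightarrow> eavg a1 a2 a3 j \<pi>w = eavg a1 a2 a3 j w"
    using pi_cr_spec[OF crs, of w] unfolding \<pi>w_def by auto
  define FcE where "FcE = (\<lambda>j. Fc (n \<bullet> (fst (edge a1 a2 a3 j) - p)) (n \<bullet> (snd (edge a1 a2 a3 j) - p)))"
  have Ew: "eavg a1 a2 a3 j w = FcE j" if j: "j \<in> {1,2,3}" for j
  proof -
    have "eavg a1 a2 a3 j w = eavg a1 a2 a3 j (\<lambda>x. 0) + 1 * FcE j"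
      unfolding FcE_def
      by (rule eavg_piece[OF pos neg P1_const(1) _ j]) (use wT T_def in simp)
    moreover have "eavg a1 a2 a3 j (\<lambda>x. 0) = 0" using eavg_P1[OF P1_const(1)] by simp
    ultimately show ?thesis by simp
  qed
  have v1f: "fst (v x) = vm1 x + (c * n2) * max 0 (n \<bullet> (x - p))"
    if xh: "x \<in> convex hull {a1, a2, a3}" "n \<bullet> (x - p) \<noteq> 0" for x
  proof -
    consider "n \<bullet> (x - p) > 0" | "n \<bullet> (x - p) < 0" using xh(2) by linarith
    then show ?thesis
    proof cases
      case 1 then have "x \<in> Tp" using xh(1) Tp_def T_def by auto
      then show ?thesis using IF(3) vp1e[of x] 1 unfolding vp1_def by simp
    next
      case 2 then have "x \<in> Tm" using xh(1) Tm_def T_def by auto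
      then show ?thesis using IF(4) 2 unfolding vm1_def by simp
    qed
  qed
  have v2f: "snd (v x) = vm2 x + (- c * n1) * max 0 (n \<bullet> (x - p))"
    if xh: "x \<in> convex hull {a1, a2, a3}" "n \<bullet> (x - p) \<noteq> 0" for x
  proof -
    consider "n \<bullet> (x - p) > 0" | "n \<bullet> (x - p) < 0" using xh(2) by linarith
    then show ?thesis
    proof cases
      case 1 then have "x \<in> Tp" using xh(1) Tp_def T_def by auto
      then show ?thesis using IF(3) vp2e[of x] 1 unfolding vp2_def by simp
    next
      case 2 then have "x \<in> Tm" using xh(1) Tm_def T_def by auto
      then show ?thesis using IF(4) 2 unfolding vm2_def by simp
    qed
  qed
  have Ev1: "eavg a1 a2 a3 j (\<lambda>x. fst (v x)) = eavg a1 a2 a3 j vm1 + (c * n2) * FcE j" if "j \<in> {1,2,3}" for j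
    unfolding FcE_def by (rule eavg_piece[OF pos neg P(3) v1f that])
  have Ev2: "eavg a1 a2 a3 j (\<lambda>x. snd (v x)) = eavg a1 a2 a3 j vm2 + (- c * n1) * FcE j" if "j \<in> {1,2,3}" for j
    unfolding FcE_def by (rule eavg_piece[OF pos neg P(4) v2f that])
  define Q1 where "Q1 = (\<lambda>x. vm1 x + (c * n2) * \<pi>w x)"
  define Q2 where "Q2 = (\<lambda>x. vm2 x + (- c * n1) * \<pi>w x)"
  have Q1P: "P1 Q1 \<and> pd1 Q1 = pd1 vm1 + (c * n2) * pd1 \<pi>w \<and> pd2 Q1 = pd2 vm1 + (c * n2) * pd2 \<pi>w"
    by (rule pd_lin[OF P(3) piw(1)]) (simp add: Q1_def)
  have Q2P: "P1 Q2 \<and> pd1 Q2 = pd1 vm2 + (- c * n1) * pd1 \<pi>w \<and> pd2 Q2 = pd2 vm2 + (- c * n1) * pd2 \<pi>w"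
    by (rule pd_lin[OF P(4) piw(1)]) (simp add: Q2_def)
  have EQ1: "eavg a1 a2 a3 j Q1 = eavg a1 a2 a3 j vm1 + (c * n2) * FcE j" if j: "j \<in> {1,2,3}" for j
    using eavg_P1[of Q1] eavg_P1[OF P(3)] eavg_P1[OF piw(1)] Q1P piw(2)[OF j] Ew[OF j]
    unfolding Q1_def by simp
  have EQ2: "eavg a1 a2 a3 j Q2 = eavg a1 a2 a3 j vm2 + (- c * n1) * FcE j" if j: "j \<in> {1,2,3}" for j
    using eavg_P1[of Q2] eavg_P1[OF P(4)] eavg_P1[OF piw(1)] Q2P piw(2)[OF j] Ew[OF j]
    unfolding Q2_def by simp
  define N where "N = (\<lambda>i. Ndof a1 a2 a3 i v q)"
  define F1 where "F1 = (\<lambda>x. \<Sum>i\<in>{1,2,3::nat}. N i * cr_basis a1 a2 a3 i x)"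
  define F2 where "F2 = (\<lambda>x. \<Sum>i\<in>{1,2,3::nat}. N (i + 3) * cr_basis a1 a2 a3 i x)"
  have F1s: "P1 F1 \<and> (\<forall>j\<in>{1,2,3}. eavg a1 a2 a3 j F1 = N j)"
    unfolding F1_def by (rule cr_comb[OF crs])
  have F2s: "P1 F2 \<and> (\<forall>j\<in>{1,2,3}. eavg a1 a2 a3 j F2 = N (j + 3))"
    unfolding F2_def using cr_comb[OF crs, of "\<lambda>i. N (i + 3)"] by simp
  have N1: "N j = eavg a1 a2 a3 j (\<lambda>x. fst (v x))" if "j \<in> {1,2,3}" for j
    using that unfolding N_def Ndof_def by auto
  have N2: "N (j + 3) = eavg a1 a2 a3 j (\<lambda>x. snd (v x))" if "j \<in> {1,2,3}" for j
    using that unfolding N_def Ndof_def by auto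
  have F1Q: "F1 = Q1"
    by (rule cr_unique[OF crs]) (use F1s Q1P N1 Ev1 EQ1 in auto)
  have F2Q: "F2 = Q2"
    by (rule cr_unique[OF crs]) (use F2s Q2P N2 Ev2 EQ2 in auto)
  define g1 where "g1 = pd1 \<pi>w"
  define g2 where "g2 = pd2 \<pi>w"
  have IF5: "sigma_n mup vp qp n = sigma_n mum vm qm n" using IF(5) by simp
  have s12: "(2*mup*(pd1 vp1*n1 + (pd2 vp1+pd1 vp2)/2*n2) - qp*n1) - (2*mum*(pd1 vm1*n1 + (pd2 vm1+pd1 vm2)/2*n2) - qm*n1) = 0
     \<and> (2*mup*((pd2 vp1+pd1 vp2)/2*n1 + pd2 vp2*n2) - qp*n2) - (2*mum*((pd2 vm1+pd1 vm2)/2*n1 + pd2 vm2*n2) - qm*n2) = 0"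
    using IF5 unfolding sigma_n_def Let_def vp1_def[symmetric] vp2_def[symmetric] vm1_def[symmetric] vm2_def[symmetric] ne
    by simp
  note SA = stress_alg2[OF nn' mu_pos(1), where Jaa="pd1 Q1" and Jab="pd2 Q1" and Jba="pd1 Q2" and Jbb="pd2 Q2"
     and gA=g1 and gB=g2 and c=c and Aaa="pd1 vm1" and Aab="pd2 vm1" and Aba="pd1 vm2" and Abb="pd2 vm2"
     and Baa="pd1 vp1" and Bab="pd2 vp1" and Bba="pd1 vp2" and Bbb="pd2 vp2" and qp=qp and qm=qm and mum=mum]
  have A1: "pd1 vm1 = pd1 Q1 - c*n2*g1" using Q1P unfolding g1_def by simp
  have A2: "pd2 vm1 = pd2 Q1 - c*n2*g2" using Q1P unfolding g2_def by simp
  have A3: "pd1 vm2 = pd1 Q2 + c*n1*g1" using Q2P unfolding g1_def by simp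
  have A4: "pd2 vm2 = pd2 Q2 + c*n1*g2" using Q2P unfolding g2_def by simp
  have B1: "pd1 vp1 = pd1 vm1 + c*n2*n1" using pdp1 kc by simp
  have B2: "pd2 vp1 = pd2 vm1 + c*n2*n2" using pdp1 kc by simp
  have B3: "pd1 vp2 = pd1 vm2 - c*n1*n1" using pdp2 kc by simp
  have B4: "pd2 vp2 = pd2 vm2 - c*n1*n2" using pdp2 kc by simp
  note SAr = SA[OF A1 A2 A3 A4 B1 B2 B3 B4 conjunct1[OF s12] conjunct2[OF s12]]
  note SA1 = SAr(1)
  note SA2 = SAr(2)
  define tt where "tt = (snd n, - fst n)"
  define vJ0 where "vJ0 = (\<lambda>x. (\<Sum>i\<in>{1, 2, 3}. N i * cr_basis a1 a2 a3 i x,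
                        \<Sum>i\<in>{1, 2, 3}. N (i + 3) * cr_basis a1 a2 a3 i x))"
  have vJ0e: "vJ0 = (\<lambda>x. (Q1 x, Q2 x))" unfolding vJ0_def F1Q[symmetric] F2Q[symmetric] F1_def F2_def by simp
  define c1 where "c1 = sigma_n (mum - mup) vJ0 0 n \<bullet> n"
  have c1v: "c1 = qm - qp" unfolding c1_def vJ0e sigma_n_def Let_def ne using SA1 by simp
  define S where "S = g1 * n1 + g2 * n2"
  define B where "B = g1 * n2 - g2 * n1"
  define u where "u = (\<lambda>a. n \<bullet> (a - p))"
  define vv where "vv = (\<lambda>a. tt \<bullet> (a - p))"
  have rot: "\<pi>w y = \<pi>w p + S * u y + B * vv y" for y
    using alg_rot[OF piw(1) nn, of y p] unfolding S_def B_def u_def vv_def tt_def g1_def g2_def ne by simp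
  have mid_u: "u ((1/2) *\<^sub>R (a + b)) = (u a + u b)/2" "vv ((1/2) *\<^sub>R (a + b)) = (vv a + vv b)/2" for a b
    unfolding u_def vv_def by (simp_all add: inner_diff_right inner_add_right field_simps)
  have ud: "n \<bullet> (a - p) = u a" for a by (simp add: u_def)
  have ej: "\<pi>w (mid a1 a2 a3 j) = FcE j" if j: "j \<in> {1,2,3}" for j
    using eavg_P1[OF piw(1), of a1 a2 a3 j] piw(2)[OF j] Ew[OF j] by simp
  have e1: "\<pi>w p + S*((u a2 + u a3)/2) + B*((vv a2 + vv a3)/2) = Fc (u a2) (u a3)"
    using ej[of 1] rot[of "mid a1 a2 a3 1"] mid_u unfolding FcE_def by (simp add: mid_def edge_def ud)
  have e2: "\<pi>w p + S*((u a3 + u a1)/2) + B*((vv a3 + vv a1)/2) = Fc (u a3) (u a1)"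
    using ej[of 2] rot[of "mid a1 a2 a3 2"] mid_u unfolding FcE_def by (simp add: mid_def edge_def ud)
  have e3: "\<pi>w p + S*((u a1 + u a2)/2) + B*((vv a1 + vv a2)/2) = Fc (u a1) (u a2)"
    using ej[of 3] rot[of "mid a1 a2 a3 3"] mid_u unfolding FcE_def by (simp add: mid_def edge_def ud)
  have E: "(u a1 - u a2) * (vv a1 - vv a3) - (u a1 - u a3) * (vv a1 - vv a2) \<noteq> 0"
    using alg_E[OF nn, of a1 p a2 a3] crs unfolding u_def vv_def tt_def by simp
  have Sb: "0 \<le> S \<and> S \<le> 1"
    by (rule S_bound[OF E e1 e2 e3]) (use pos neg in \<open>simp_all add: u_def\<close>)
  define den where "den = 1 + (mum / mup - 1) * (grad (pi_cr a1 a2 a3 w) \<bullet> n)"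
  have denS: "den = 1 + (mum / mup - 1) * S"
    unfolding den_def S_def g1_def g2_def \<pi>w_def grad_def ne by simp
  have rpos: "mum / mup > 0" using mu_pos by simp
  have dpos: "den > 0"
  proof (cases "S = 1")
    case True then show ?thesis using denS rpos by simp
  next
    case False
    then have "1 - S > 0" using Sb by simp
    moreover have "mum / mup * S \<ge> 0" using rpos Sb by (intro mult_nonneg_nonneg) auto
    moreover have "den = (1 - S) + mum / mup * S" using denS by (simp add: algebra_simps)
    ultimately show ?thesis by simp
  qed
  define c2 where "c2 = (sigma_n (mum / mup - 1) vJ0 0 n \<bullet> tt) / den"
  have c2v: "c2 = c"
  proof -
    have "sigma_n (mum / mup - 1) vJ0 0 n \<bullet> tt = c * den"
      unfolding vJ0e sigma_n_def Let_def ne tt_def denS S_def using SA2 by simp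
    then show ?thesis unfolding c2_def using dpos by simp
  qed
  define z where "z = (\<lambda>x. if x \<in> Tp then - 1 else 0 :: real)"
  define qJ1 where "qJ1 = (\<lambda>x. z x - mean T z)"
  have Tc: "compact T" unfolding T_def by (intro compact_convex_hull finite_imp_compact) simp
  obtain x0 r where "r > 0" "ball x0 r \<subseteq> T" using interior_tri[OF tri] T_def by blast
  then have Tpos: "measure lebesgue T > 0" using meas_pos lmeasurable_compact[OF Tc] by blast
  have qmean: "mean T q = qm - (qp - qm) * mean T z"
    by (rule q_mean[OF Tc Tpos n0]) (use IF(3,4) Tp_def Tm_def in \<open>auto simp: z_def\<close>)
  have N7: "N 7 = mean T q" unfolding N_def Ndof_def T_def by simp
  define vJ2 where "vJ2 = (\<lambda>x. (w x - pi_cr a1 a2 a3 w x) *\<^sub>R tt)"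
  have FIN: "den \<noteq> 0 \<and> (\<forall>x\<in>Tp \<union> Tm. v x = vJ0 x + c2 *\<^sub>R vJ2 x \<and> q x = N 7 + c1 * qJ1 x)"
  proof (intro conjI ballI)
    show "den \<noteq> 0" using dpos by simp
    fix x assume x: "x \<in> Tp \<union> Tm"
    show "v x = vJ0 x + c2 *\<^sub>R vJ2 x"
    proof (cases "x \<in> Tp")
      case True
      then have xT: "x \<in> T" and l: "n \<bullet> (x - p) > 0" using Tp_def by auto
      have wx: "w x = n \<bullet> (x - p)" using wT[OF xT] l by simp
      have "v x = (vp1 x, vp2 x)" using IF(3) True unfolding vp1_def vp2_def by simp
      then show ?thesis unfolding vJ0e vJ2_def c2v wx \<pi>w_def[symmetric] tt_def Q1_def Q2_def
        using vp1e[of x] vp2e[of x] ne by (simp add: algebra_simps)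
    next
      case False
      then have xm: "x \<in> Tm" using x by simp
      have wx: "w x = 0" unfolding w_def using False by simp
      have "v x = (vm1 x, vm2 x)" using IF(4) xm unfolding vm1_def vm2_def by simp
      then show ?thesis unfolding vJ0e vJ2_def c2v wx \<pi>w_def[symmetric] tt_def Q1_def Q2_def
        using ne by (simp add: algebra_simps)
    qed
    show "q x = N 7 + c1 * qJ1 x"
    proof (cases "x \<in> Tp")
      case True
      then show ?thesis using IF(3) unfolding N7 qmean c1v qJ1_def z_def by (simp add: algebra_simps)
    next
      case False
      then have xm: "x \<in> Tm" using x by simp
      then show ?thesis using IF(4) False unfolding N7 qmean c1v qJ1_def z_def by (simp add: algebra_simps)
    qed
  qed
  show ?thesis unfolding Let_def using FIN
    unfolding N_def tt_def vJ0_def z_def w_def qJ1_def vJ2_def c1_def den_def c2_def by blast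
qed

theorem lemma4p4:
  fixes a1 a2 a3 p p' n :: pt
    and T Tp Tm G :: "pt set"
    and mup mum :: real
  assumes tri: "\<not> collinear {a1, a2, a3}"
    and T_def: "T = convex hull {a1, a2, a3}"
    and endpoints: "p \<in> frontier T" "p' \<in> frontier T" "p \<noteq> p'"
    and n_unit: "norm n = 1" and n_normal: "n \<bullet> (p' - p) = 0"
    and G_def: "G = open_segment p p'"
    and Tp_def: "Tp = {x \<in> T. n \<bullet> (x - p) > 0}"
    and Tm_def: "Tm = {x \<in> T. n \<bullet> (x - p) < 0}"
    and nonempty: "Tp \<noteq> {}" "Tm \<noteq> {}"
    and mu_pos: "mup > 0" "mum > 0"
  shows
    "(\<forall>v q v' q'. IFE Tp Tm G n mup mum v q \<and> IFE Tp Tm G n mup mum v' q' \<and>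
        (\<forall>i\<in>{1..7}. Ndof a1 a2 a3 i v q = Ndof a1 a2 a3 i v' q') \<longrightarrow>
        (\<forall>x\<in>Tp \<union> Tm. v x = v' x \<and> q x = q' x))
     \<and>
     (\<forall>v q. IFE Tp Tm G n mup mum v q \<longrightarrow>
       (let N = (\<lambda>i. Ndof a1 a2 a3 i v q);
            t = (snd n, - fst n);
            vJ0 = (\<lambda>x. (\<Sum>i\<in>{1, 2, 3}. N i * cr_basis a1 a2 a3 i x,
                        \<Sum>i\<in>{1, 2, 3}. N (i + 3) * cr_basis a1 a2 a3 i x));
            qJ0 = N 7;
            z = (\<lambda>x. if x \<in> Tp then - 1 else 0 :: real);
            w = (\<lambda>x. if x \<in> Tp then infdist x (affine hull G) else 0);
            qJ1 = (\<lambda>x. z x - mean T z);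
            vJ2 = (\<lambda>x. (w x - pi_cr a1 a2 a3 w x) *\<^sub>R t);
            c1 = sigma_n (mum - mup) vJ0 0 n \<bullet> n;
            den = 1 + (mum / mup - 1) * (grad (pi_cr a1 a2 a3 w) \<bullet> n);
            c2 = (sigma_n (mum / mup - 1) vJ0 0 n \<bullet> t) / den
        in den \<noteq> 0 \<and>
           (\<forall>x\<in>Tp \<union> Tm. v x = vJ0 x + c2 *\<^sub>R vJ2 x \<and> q x = qJ0 + c1 * qJ1 x)))"
proof -
  note R = rep[OF tri T_def endpoints n_unit n_normal G_def Tp_def Tm_def nonempty mu_pos]
  show ?thesis
  proof (intro conjI allI impI)
    fix v q v' q'
    assume H: "IFE Tp Tm G n mup mum v q \<and> IFE Tp Tm G n mup mum v' q' \<and>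
        (\<forall>i\<in>{1..7}. Ndof a1 a2 a3 i v q = Ndof a1 a2 a3 i v' q')"
    have V1: "(\<Sum>i\<in>{1, 2, 3}. Ndof a1 a2 a3 i v q * cr_basis a1 a2 a3 i x) =
              (\<Sum>i\<in>{1, 2, 3}. Ndof a1 a2 a3 i v' q' * cr_basis a1 a2 a3 i x)" for x
      using H by (intro sum.cong) auto
    have V2: "(\<Sum>i\<in>{1, 2, 3}. Ndof a1 a2 a3 (i + 3) v q * cr_basis a1 a2 a3 i x) =
              (\<Sum>i\<in>{1, 2, 3}. Ndof a1 a2 a3 (i + 3) v' q' * cr_basis a1 a2 a3 i x)" for x
      using H by (intro sum.cong) auto
    have Q7: "Ndof a1 a2 a3 7 v q = Ndof a1 a2 a3 7 v' q'" using H by simp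
    note R1 = R[OF conjunct1[OF H], unfolded Let_def]
    note R1' = R1[unfolded V1 V2 Q7]
    note R2 = R[OF conjunct1[OF conjunct2[OF H]], unfolded Let_def]
    show "\<forall>x\<in>Tp \<union> Tm. v x = v' x \<and> q x = q' x"
      using R1' R2 by auto
  next
    fix v q
    assume "IFE Tp Tm G n mup mum v q"
    then show "let N = (\<lambda>i. Ndof a1 a2 a3 i v q);
            t = (snd n, - fst n);
            vJ0 = (\<lambda>x. (\<Sum>i\<in>{1, 2, 3}. N i * cr_basis a1 a2 a3 i x,
                        \<Sum>i\<in>{1, 2, 3}. N (i + 3) * cr_basis a1 a2 a3 i x));
            qJ0 = N 7;
            z = (\<lambda>x. if x \<in> Tp then - 1 else 0 :: real);
            w = (\<lambda>x. if x \<in> Tp then infdist x (affine hull G) else 0);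
            qJ1 = (\<lambda>x. z x - mean T z);
            vJ2 = (\<lambda>x. (w x - pi_cr a1 a2 a3 w x) *\<^sub>R t);
            c1 = sigma_n (mum - mup) vJ0 0 n \<bullet> n;
            den = 1 + (mum / mup - 1) * (grad (pi_cr a1 a2 a3 w) \<bullet> n);
            c2 = (sigma_n (mum / mup - 1) vJ0 0 n \<bullet> t) / den
        in den \<noteq> 0 \<and>
           (\<forall>x\<in>Tp \<union> Tm. v x = vJ0 x + c2 *\<^sub>R vJ2 x \<and> q x = qJ0 + c1 * qJ1 x)"
      by (rule R)
  qed
qed

end
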